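(* Let $\lambda\in\mathbb{C}^*$, $\eta\in\mathbb{C}$, $\sigma\in\mathbb{C}[X]$ with $\sigma\ne0$, and let $R$ be an irreducible restricted $\mathcal{G}$-module. Then: (1) $\Omega(\lambda,\eta,\sigma,0)\otimes R$ is an irreducible $\mathcal{G}$-module if and only if $\sigma$ is a nonzero constant; (2) $\Omega(\lambda,\eta,0,\sigma)\otimes R$ is an irreducible $\mathcal{G}$-module if and only if $\sigma$ is a nonzero constant.
   Context: $\mathcal{G}$ is the complex Lie algebra with basis $\{L_n,H_n,I_n,J_n,\mathbf{c}_1,\mathbf{c}_2,\mathbf{c}_3: n\in\mathbb{Z}\}$ whose brackets of basis elements are $[L_m,L_n]=(n-m)L_{m+n}+\frac{m^3-m}{12}\delta_{m+n,0}\mathbf{c}_1$, $[L_m,H_n]=nH_{m+n}+m^2\delta_{m+n,0}\mathbf{c}_2$, $[H_m,H_n]=m\delta_{m+n,0}\mathbf{c}_3$, $[L_m,I_n]=(n-m)I_{m+n}$, $[L_m,J_n]=(n-m)J_{m+n}$, $[H_m,I_n]=I_{m+n}$, $[H_m,J_n]=-J_{m+n}$ (and antisymmetric counterparts), all other brackets of basis elements zero. $\mathcal{G}=\bigoplus_{i\in\mathbb{Z}}\mathcal{G}^i$ is $\mathbb{Z}$-graded with $\mathcal{G}^i$ spanned by $L_i,H_i,I_i,J_i$ (and also $\mathbf{c}_1,\mathbf{c}_2,\mathbf{c}_3$ when $i=0$). A $\mathcal{G}$-module $R$ is restricted if for every $v\in R$ there is $N\in\mathbb{N}$ with $\mathcal{G}^iv=0$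 for all $i>N$. For $\lambda\in\mathbb{C}^*,\eta\in\mathbb{C}$, $0\ne\sigma\in\mathbb{C}[X]$: $\Omega(\lambda,\eta,\sigma,0)$ is $\mathbb{C}[X,Y]$ with $L_mf(X,Y)=\lambda^mf(X,Y-m)(Y-mX+m\eta)$, $H_mf=\lambda^mXf(X,Y-m)$, $I_mf=\lambda^m\sigma(X) f(X-1,Y-m)$, and $J_m,\mathbf{c}_1,\mathbf{c}_2,\mathbf{c}_3$ acting as $0$; $\Omega(\lambda,\eta,0,\sigma)$ is $\mathbb{C}[X,Y]$ with $L_mf=\lambda^mf(X,Y-m)(Y+mX+m\eta)$, $H_mf=\lambda^mXf(X,Y-m)$, $J_mf=\lambda^m\sigma(X)f(X+1,Y-m)$, and $I_m,\mathbf{c}_1,\mathbf{c}_2,\mathbf{c}_3$ acting as $0$ ($m\in\mathbb{Z}$). Tensor products carry the action $x(u\otimes v)=xu\otimes v+u\otimes xv$. *)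

theory Defs
  imports "HOL-Computational_Algebra.Polynomial" "HOL-Library.Function_Algebras"
begin

datatype gbasis = L int | H int | I int | J int | C1 | C2 | C3

fun br :: "gbasis \<Rightarrow> gbasis \<Rightarrow> (complex \<times> gbasis) list" where
  "br (L m) (L n) = [(of_int (n - m), L (m + n)),
                     (if m + n = 0 then of_int (m^3 - m) / 12 else 0, C1)]"
| "br (L m) (H n) = [(of_int n, H (m + n)), (if m + n = 0 then of_int (m^2) else 0, C2)]"
| "br (H n) (L m) = [(- of_int n, H (m + n)), (if m + n = 0 then - of_int (m^2) else 0, C2)]"
| "br (H m) (H n) = [(if m + n = 0 then of_int m else 0, C3)]"
| "br (L m) (I n) = [(of_int (n - m), I (m + n))]"
| "br (I n) (L m) = [(- of_int (n - m), I (m + n))]"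
| "br (L m) (J n) = [(of_int (n - m), J (m + n))]"
| "br (J n) (L m) = [(- of_int (n - m), J (m + n))]"
| "br (H m) (I n) = [(1, I (m + n))]"
| "br (I n) (H m) = [(-1, I (m + n))]"
| "br (H m) (J n) = [(-1, J (m + n))]"
| "br (J n) (H m) = [(1, J (m + n))]"
| "br _ _ = []"

fun gdeg :: "gbasis \<Rightarrow> int" where
  "gdeg (L n) = n" | "gdeg (H n) = n" | "gdeg (I n) = n" | "gdeg (J n) = n"
| "gdeg C1 = 0" | "gdeg C2 = 0" | "gdeg C3 = 0"

definition subspace_in :: "(complex \<Rightarrow> 'v::ab_group_add \<Rightarrow> 'v) \<Rightarrow> 'v set \<Rightarrow> bool" where
  "subspace_in s N \<longleftrightarrow> 0 \<in> N \<and> (\<forall>u\<in>N. \<forall>v\<in>N. u + v \<in> N) \<and> (\<forall>c. \<forall>u\<in>N. s c u \<in> N)"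

definition gmodule_on :: "(complex \<Rightarrow> 'v::ab_group_add \<Rightarrow> 'v) \<Rightarrow> 'v set \<Rightarrow> (gbasis \<Rightarrow> 'v \<Rightarrow> 'v) \<Rightarrow> bool" where
  "gmodule_on s M \<rho> \<longleftrightarrow> subspace_in s M \<and>
     (\<forall>x. \<forall>v\<in>M. \<rho> x v \<in> M) \<and>
     (\<forall>x. \<forall>u\<in>M. \<forall>v\<in>M. \<rho> x (u + v) = \<rho> x u + \<rho> x v) \<and>
     (\<forall>x c. \<forall>u\<in>M. \<rho> x (s c u) = s c (\<rho> x u)) \<and>
     (\<forall>x y. \<forall>v\<in>M. \<rho> x (\<rho> y v) - \<rho> y (\<rho> x v) = (\<Sum>(c, z)\<leftarrow>br x y. s c (\<rho> z v)))"

definition irreducible_gmod :: "(complex \<Rightarrow> 'v::ab_group_add \<Rightarrow> 'v) \<Rightarrow> 'v set \<Rightarrow> (gbasis \<Rightarrow> 'v \<Rightarrow> 'v) \<Rightarrow> bool" where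
  "irreducible_gmod s M \<rho> \<longleftrightarrow> gmodule_on s M \<rho> \<and> M \<noteq> {0} \<and>
     (\<forall>N. N \<subseteq> M \<and> subspace_in s N \<and> (\<forall>x. \<forall>v\<in>N. \<rho> x v \<in> N) \<longrightarrow> N = {0} \<or> N = M)"

definition restricted_gmod :: "'v::zero set \<Rightarrow> (gbasis \<Rightarrow> 'v \<Rightarrow> 'v) \<Rightarrow> bool" where
  "restricted_gmod M \<rho> \<longleftrightarrow> (\<forall>v\<in>M. \<exists>N::nat. \<forall>x. gdeg x > int N \<longrightarrow> \<rho> x v = 0)"

text \<open>C[X,Y] is represented as complex poly poly: polynomials in Y whose
  coefficients are polynomials in X.\<close>
definition polyX :: "complex poly poly" where "polyX = [:[:0, 1:]:]"

definition shiftY :: "int \<Rightarrow> complex poly poly \<Rightarrow> complex poly poly"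
  where "shiftY m f = pcompose f [:[:- of_int m:], 1:]"

definition shiftX :: "complex \<Rightarrow> complex poly poly \<Rightarrow> complex poly poly"
  where "shiftX a f = map_poly (\<lambda>c. pcompose c [:a, 1:]) f"

definition cst :: "complex \<Rightarrow> complex poly poly" where "cst a = [:[:a:]:]"

text \<open>Omega(lam, eta, sig, 0).\<close>
fun omegaI :: "complex \<Rightarrow> complex \<Rightarrow> complex poly \<Rightarrow> gbasis \<Rightarrow> complex poly poly \<Rightarrow> complex poly poly" where
  "omegaI lam eta sig (L m) f = cst (lam powi m) * shiftY m f * [:[:of_int m * eta, - of_int m:], 1:]"
| "omegaI lam eta sig (H m) f = cst (lam powi m) * polyX * shiftY m f"
| "omegaI lam eta sig (I m) f = cst (lam powi m) * [:sig:] * shiftX (-1) (shiftY m f)"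
| "omegaI lam eta sig _ f = 0"

text \<open>Omega(lam, eta, 0, sig).\<close>
fun omegaJ :: "complex \<Rightarrow> complex \<Rightarrow> complex poly \<Rightarrow> gbasis \<Rightarrow> complex poly poly \<Rightarrow> complex poly poly" where
  "omegaJ lam eta sig (L m) f = cst (lam powi m) * shiftY m f * [:[:of_int m * eta, of_int m:], 1:]"
| "omegaJ lam eta sig (H m) f = cst (lam powi m) * polyX * shiftY m f"
| "omegaJ lam eta sig (J m) f = cst (lam powi m) * [:sig:] * shiftX 1 (shiftY m f)"
| "omegaJ lam eta sig _ f = 0"

text \<open>Tensor product C[X,Y] \<otimes> R realised as finitely supported functions
  F : nat \<times> nat \<Rightarrow> R, F = \<Sum> X^a Y^b \<otimes> F(a,b).\<close>
definition tcarrier :: "(nat \<times> nat \<Rightarrow> 'v::zero) set" where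
  "tcarrier = {F. finite {k. F k \<noteq> 0}}"

definition tscale :: "(complex \<Rightarrow> 'v \<Rightarrow> 'v) \<Rightarrow> complex \<Rightarrow> (nat \<times> nat \<Rightarrow> 'v) \<Rightarrow> (nat \<times> nat \<Rightarrow> 'v)" where
  "tscale s c F = (\<lambda>k. s c (F k))"

definition xymonom :: "nat \<times> nat \<Rightarrow> complex poly poly"
  where "xymonom k = monom (monom 1 (fst k)) (snd k)"

definition xycoeff :: "complex poly poly \<Rightarrow> nat \<times> nat \<Rightarrow> complex"
  where "xycoeff p k = coeff (coeff p (snd k)) (fst k)"

text \<open>Action x(u \<otimes> v) = xu \<otimes> v + u \<otimes> xv on the tensor product.\<close>
definition tens_act :: "(complex \<Rightarrow> 'v::ab_group_add \<Rightarrow> 'v) \<Rightarrow> (gbasis \<Rightarrow> complex poly poly \<Rightarrow> complex poly poly)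
     \<Rightarrow> (gbasis \<Rightarrow> 'v \<Rightarrow> 'v) \<Rightarrow> gbasis \<Rightarrow> (nat \<times> nat \<Rightarrow> 'v) \<Rightarrow> (nat \<times> nat \<Rightarrow> 'v)" where
  "tens_act s A B x F = (\<lambda>j. (\<Sum>k\<in>{k. F k \<noteq> 0}. s (xycoeff (A x (xymonom k)) j) (F k)) + B x (F j))"

end

theory Submission
  imports Defs
begin

definition Yv :: "complex poly poly" where "Yv = [:0, 1:]"

lemma cst_add: "cst (a + b) = cst a + cst b" by (simp add: cst_def)
lemma cst_diff: "cst (a - b) = cst a - cst b" by (simp add: cst_def)
lemma cst_minus: "cst (- a) = - cst a" by (simp add: cst_def)
lemma cst_mult: "cst (a * b) = cst a * cst b" by (simp add: cst_def)
lemma cst_0[simp]: "cst 0 = 0" by (simp add: cst_def)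
lemma cst_1[simp]: "cst 1 = 1" by (simp add: cst_def one_pCons)
lemma cst_of_int: "cst (of_int n) = of_int n"
  by (simp add: cst_def of_int_poly)
lemma cst_eq_0_iff[simp]: "cst a = 0 \<longleftrightarrow> a = 0" by (simp add: cst_def)

lemma coeff_shiftX: "coeff (shiftX a f) n = pcompose (coeff f n) [:a, 1:]"
  unfolding shiftX_def by (simp add: coeff_map_poly)

lemma shiftX_add: "shiftX a (f + g) = shiftX a f + shiftX a g"
  by (rule poly_eqI) (simp add: coeff_shiftX pcompose_add)
lemma shiftX_diff: "shiftX a (f - g) = shiftX a f - shiftX a g"
  by (rule poly_eqI) (simp add: coeff_shiftX pcompose_diff)
lemma shiftX_minus: "shiftX a (- f) = - shiftX a f"
  by (rule poly_eqI) (simp add: coeff_shiftX pcompose_uminus)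
lemma shiftX_0[simp]: "shiftX a 0 = 0"
  by (simp add: shiftX_def)
lemma shiftX_mult: "shiftX a (f * g) = shiftX a f * shiftX a g"
  by (rule poly_eqI) (simp add: coeff_shiftX coeff_mult pcompose_sum pcompose_mult)
lemma shiftX_sum: "shiftX a (sum f S) = sum (\<lambda>i. shiftX a (f i)) S"
  by (induction S rule: infinite_finite_induct) (auto simp: shiftX_add)
lemma shiftX_const: "shiftX a [:p:] = [:pcompose p [:a, 1:]:]"
  unfolding shiftX_def by (simp add: map_poly_pCons)
lemma shiftX_cst[simp]: "shiftX a (cst c) = cst c"
  by (simp add: cst_def shiftX_const)
lemma shiftX_Y[simp]: "shiftX a Yv = Yv"
  unfolding shiftX_def Yv_def by (simp add: map_poly_pCons pcompose_1)
lemma shiftX_X: "shiftX a polyX = polyX + cst a"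
  unfolding polyX_def cst_def by (simp add: shiftX_const pcompose_pCons)
lemma shiftX_pCons: "shiftX a (pCons c f) = pCons (pcompose c [:a,1:]) (shiftX a f)"
  unfolding shiftX_def by (simp add: map_poly_pCons)
lemma shiftX_pcompose: "shiftX a (pcompose f g) = pcompose (shiftX a f) (shiftX a g)"
  by (induction f) (simp_all add: pcompose_pCons shiftX_add shiftX_mult shiftX_const shiftX_pCons)
lemma shiftX_shiftX: "shiftX a (shiftX b f) = shiftX (a + b) f"
  by (rule poly_eqI) (simp add: coeff_shiftX pcompose_assoc[symmetric] pcompose_pCons algebra_simps)
lemma shiftX_zero_shift[simp]: "shiftX 0 f = f"
  by (rule poly_eqI) (simp add: coeff_shiftX)
lemma shiftX_eq_0_iff[simp]: "shiftX a f = 0 \<longleftrightarrow> f = 0"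
proof
  assume "shiftX a f = 0"
  hence "shiftX (-a) (shiftX a f) = 0" by simp
  thus "f = 0" by (simp add: shiftX_shiftX)
qed simp
lemma degree_shiftX[simp]: "degree (shiftX a f) = degree f"
  unfolding shiftX_def
  by (rule degree_map_poly) (simp add: pcompose_eq_0_iff)

lemma shiftY_pc: "shiftY m f = pcompose f [:[:- of_int m:], 1:]" by (simp add: shiftY_def)
lemma shiftY_add: "shiftY m (f + g) = shiftY m f + shiftY m g"
  by (simp add: shiftY_def pcompose_add)
lemma shiftY_diff: "shiftY m (f - g) = shiftY m f - shiftY m g"
  by (simp add: shiftY_def pcompose_diff)
lemma shiftY_minus: "shiftY m (- f) = - shiftY m f"
  by (simp add: shiftY_def pcompose_uminus)
lemma shiftY_mult: "shiftY m (f * g) = shiftY m f * shiftY m g"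
  by (simp add: shiftY_def pcompose_mult)
lemma shiftY_sum: "shiftY m (sum f S) = sum (\<lambda>i. shiftY m (f i)) S"
  by (simp add: shiftY_def pcompose_sum)
lemma shiftY_const[simp]: "shiftY m [:p:] = [:p:]"
  by (simp add: shiftY_def)
lemma shiftY_cst[simp]: "shiftY m (cst c) = cst c"
  by (simp add: cst_def)
lemma shiftY_X[simp]: "shiftY m polyX = polyX"
  by (simp add: polyX_def)
lemma shiftY_0[simp]: "shiftY m 0 = 0" by (simp add: shiftY_def)
lemma shiftY_Y: "shiftY m Yv = Yv - cst (of_int m)"
  by (simp add: shiftY_def Yv_def cst_def pcompose_pCons)
lemma shiftY_shiftY: "shiftY m (shiftY n f) = shiftY (m + n) f"
  unfolding shiftY_def pcompose_assoc[symmetric]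
  by (simp add: pcompose_pCons algebra_simps)
lemma shiftY_zero_shift[simp]: "shiftY 0 f = f"
  by (simp add: shiftY_def)
lemma degree_shiftY[simp]: "degree (shiftY m f) = degree f"
  by (simp add: shiftY_def degree_pcompose)
lemma shiftY_eq_0_iff[simp]: "shiftY m f = 0 \<longleftrightarrow> f = 0"
  by (simp add: shiftY_def pcompose_eq_0_iff)
lemma shiftX_shiftY: "shiftX a (shiftY m f) = shiftY m (shiftX a f)"
  by (simp add: shiftY_def shiftX_pcompose shiftX_pCons shiftX_const pcompose_1)
lemma shiftY_degree0: "degree f = 0 \<Longrightarrow> shiftY m f = f"
  by (metis degree_0_id shiftY_const)


definition linP :: "(complex poly poly \<Rightarrow> complex poly poly) \<Rightarrow> bool" where
  "linP P \<longleftrightarrow> (\<forall>f g. P (f + g) = P f + P g) \<and> (\<forall>c f. P (cst c * f) = cst c * P f)"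

lemma Lpoly_I: "[:[:of_int m * eta, - of_int m:], 1:] = Yv + cst (of_int m * eta) - cst (of_int m) * polyX"
  by (simp add: Yv_def cst_def polyX_def)
lemma Lpoly_J: "[:[:of_int m * eta, of_int m:], 1:] = Yv + cst (of_int m * eta) + cst (of_int m) * polyX"
  by (simp add: Yv_def cst_def polyX_def)

lemma omegaI_L': "omegaI lam eta sig (L m) f = cst (lam powi m) * shiftY m f * (Yv + cst (of_int m * eta) - cst (of_int m) * polyX)"
  by (simp add: Lpoly_I)
lemma omegaJ_L': "omegaJ lam eta sig (L m) f = cst (lam powi m) * shiftY m f * (Yv + cst (of_int m * eta) + cst (of_int m) * polyX)"
  by (simp add: Lpoly_J)

lemma shiftY_of_int[simp]: "shiftY m (of_int n) = of_int n"
  by (metis cst_of_int shiftY_cst)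
lemma shiftX_of_int[simp]: "shiftX a (of_int n) = of_int n"
  by (metis cst_of_int shiftX_cst)
lemma shiftY_smult: "shiftY m (smult c g) = smult c (shiftY m g)"
  by (simp add: shiftY_def pcompose_smult)
lemma shiftX_smult: "shiftX a (smult c g) = smult (pcompose c [:a,1:]) (shiftX a g)"
proof -
  have "smult c g = [:c:] * g" by simp
  thus ?thesis by (simp only: shiftX_mult shiftX_const) simp
qed

lemmas shift_simps = shiftY_add shiftY_diff shiftY_mult shiftY_Y shiftY_shiftY shiftX_add shiftX_diff
  shiftX_mult shiftX_X shiftX_shiftX shiftX_shiftY[symmetric] shiftX_const cst_add cst_diff cst_mult cst_of_int
  cst_minus shiftY_smult shiftX_smult

lemma smult_as_mult: "smult c p = [:c:] * p" by simp

lemma omegaI_brk: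
  assumes "lam \<noteq> 0"
  shows "omegaI lam eta sig x (omegaI lam eta sig y f) - omegaI lam eta sig y (omegaI lam eta sig x f)
     = (\<Sum>(c, z)\<leftarrow>br x y. cst c * omegaI lam eta sig z f)"
  apply (cases x; cases y)
  apply (simp_all only: omegaI_L' omegaI.simps br.simps list.map sum_list.Cons sum_list.Nil prod.case)
  apply (simp_all add: shift_simps power_int_add assms pcompose_pCons)
  apply (simp_all only: add.commute[of "_::int"] smult_as_mult)
  apply (simp_all add: algebra_simps)
  done

lemma omegaJ_brk:
  assumes "lam \<noteq> 0"
  shows "omegaJ lam eta sig x (omegaJ lam eta sig y f) - omegaJ lam eta sig y (omegaJ lam eta sig x f)
     = (\<Sum>(c, z)\<leftarrow>br x y. cst c * omegaJ lam eta sig z f)"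
  apply (cases x; cases y)
  apply (simp_all only: omegaJ_L' omegaJ.simps br.simps list.map sum_list.Cons sum_list.Nil prod.case)
  apply (simp_all add: shift_simps power_int_add assms pcompose_pCons)
  apply (simp_all only: add.commute[of "_::int"] smult_as_mult)
  apply (simp_all add: algebra_simps)
  done



lemma fun_sum_apply: "(sum F Ks) j = sum (\<lambda>i. F i j) Ks"
  by (induction Ks rule: infinite_finite_induct) auto

lemma fun_sum_list_apply: "(sum_list xs) j = sum_list (map (\<lambda>F. F j) xs)"
  by (induction xs) auto

lemma xycoeff_add: "xycoeff (f + g) j = xycoeff f j + xycoeff g j"
  by (simp add: xycoeff_def)
lemma xycoeff_diff: "xycoeff (f - g) j = xycoeff f j - xycoeff g j"
  by (simp add: xycoeff_def)
lemma xycoeff_0[simp]: "xycoeff 0 j = 0"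
  by (simp add: xycoeff_def)
lemma xycoeff_cst_mult: "xycoeff (cst c * f) j = c * xycoeff f j"
  by (simp add: xycoeff_def cst_def)
lemma xycoeff_sum: "xycoeff (sum f S) j = (\<Sum>i\<in>S. xycoeff (f i) j)"
  by (induction S rule: infinite_finite_induct) (auto simp: xycoeff_add)
lemma xycoeff_xymonom: "xycoeff (xymonom k) j = (if k = j then 1 else 0)"
  by (cases k; cases j) (auto simp: xycoeff_def xymonom_def coeff_monom)
lemma xycoeff_cst: "xycoeff (cst c) j = (if j = (0,0) then c else 0)"
  by (cases j) (auto simp: xycoeff_def cst_def coeff_pCons split: nat.splits)
lemma xycoeff_1: "xycoeff 1 j = (if j = (0,0) then 1 else 0)"
  using xycoeff_cst[of 1 j] by simp
lemma poly_eq_xycoeff: "f = g \<longleftrightarrow> (\<forall>j. xycoeff f j = xycoeff g j)"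
  by (auto simp: xycoeff_def poly_eq_iff)

lemma finite_xycoeff: "finite {j. xycoeff f j \<noteq> 0}"
proof -
  have "{j. xycoeff f j \<noteq> 0} \<subseteq> (\<lambda>(b, a). (a, b)) ` (SIGMA b:{..degree f}. {..degree (coeff f b)})"
  proof
    fix j assume "j \<in> {j. xycoeff f j \<noteq> 0}"
    then obtain a b where j: "j = (a, b)" and c: "coeff (coeff f b) a \<noteq> 0"
      by (cases j) (auto simp: xycoeff_def)
    from c have "coeff f b \<noteq> 0" by auto
    hence "b \<le> degree f" by (rule le_degree)
    moreover from c have "a \<le> degree (coeff f b)" by (rule le_degree)
    ultimately show "j \<in> (\<lambda>(b, a). (a, b)) ` (SIGMA b:{..degree f}. {..degree (coeff f b)})"
      using j by (auto intro!: image_eqI[of _ _ "(b, a)"])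
  qed
  thus ?thesis by (rule finite_subset) auto
qed

lemma poly_expand:
  assumes "finite S" "{j. xycoeff f j \<noteq> 0} \<subseteq> S"
  shows "f = (\<Sum>k\<in>S. cst (xycoeff f k) * xymonom k)"
proof -
  have "xycoeff (\<Sum>k\<in>S. cst (xycoeff f k) * xymonom k) j = xycoeff f j" for j
  proof -
    have "xycoeff (\<Sum>k\<in>S. cst (xycoeff f k) * xymonom k) j
        = (\<Sum>k\<in>S. xycoeff f k * (if k = j then 1 else 0))"
      by (simp add: xycoeff_sum xycoeff_cst_mult xycoeff_xymonom)
    also have "\<dots> = (if j \<in> S then xycoeff f j else 0)"
      by (simp add: if_distrib assms(1) cong: if_cong)
    also have "\<dots> = xycoeff f j" using assms(2) by auto
    finally show ?thesis .
  qed
  thus ?thesis by (simp add: poly_eq_xycoeff)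
qed

definition tens :: "(complex \<Rightarrow> 'v::zero \<Rightarrow> 'v) \<Rightarrow> complex poly poly \<Rightarrow> 'v \<Rightarrow> nat \<times> nat \<Rightarrow> 'v" where
  "tens s f v = (\<lambda>j. s (xycoeff f j) v)"

definition opT :: "(complex \<Rightarrow> 'v::ab_group_add \<Rightarrow> 'v) \<Rightarrow> (complex poly poly \<Rightarrow> complex poly poly)
    \<Rightarrow> (nat \<times> nat \<Rightarrow> 'v) \<Rightarrow> nat \<times> nat \<Rightarrow> 'v" where
  "opT s P F = (\<lambda>j. \<Sum>k\<in>{k. F k \<noteq> 0}. s (xycoeff (P (xymonom k)) j) (F k))"

lemma linP_id: "linP (\<lambda>f. f)" by (simp add: linP_def)
lemma linP_comp: "linP P \<Longrightarrow> linP Q \<Longrightarrow> linP (\<lambda>f. P (Q f))" by (simp add: linP_def)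
lemma linP_0: "linP P \<Longrightarrow> P 0 = 0"
  unfolding linP_def by (metis cst_0 mult_zero_left)
lemma linP_minus: "linP P \<Longrightarrow> P (- f) = - P f"
  by (metis add_eq_0_iff linP_0 linP_def)
lemma linP_diff': "linP P \<Longrightarrow> P (f - g) = P f - P g"
  by (metis diff_conv_add_uminus linP_def linP_minus)
lemma linP_sum: assumes "linP P" shows "P (sum f S) = (\<Sum>i\<in>S. P (f i))"
proof -
  have a: "P (f + g) = P f + P g" for f g using assms by (simp add: linP_def)
  show ?thesis by (induction S rule: infinite_finite_induct) (simp_all add: linP_0[OF assms] a)
qed
lemma linP_diff: "linP P \<Longrightarrow> linP Q \<Longrightarrow> linP (\<lambda>f. P f - Q f)"
  by (simp add: linP_def algebra_simps)
lemma linP_cmult: "linP P \<Longrightarrow> linP (\<lambda>f. cst c * P f)"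
  by (simp add: linP_def algebra_simps)
lemma linP_funpow: assumes "linP P" shows "linP (P ^^ n)"
proof (induction n)
  case 0 thus ?case using linP_id by (simp add: id_def)
next
  case (Suc n)
  have "(P ^^ Suc n) = (\<lambda>f. P ((P ^^ n) f))" by (simp add: fun_eq_iff)
  thus ?case using linP_comp[OF assms Suc] by simp
qed

lemma linP_omegaI: "linP (omegaI lam eta sig x)"
  by (cases x) (simp_all add: linP_def shiftY_add shiftY_mult shiftX_add shiftX_mult algebra_simps)
lemma linP_omegaJ: "linP (omegaJ lam eta sig x)"
  by (cases x) (simp_all add: linP_def shiftY_add shiftY_mult shiftX_add shiftX_mult algebra_simps)

lemma scale_ite_helper: "(if P then a else b) * c = (if P then a * c else b * c)" by simp

locale cvs = vector_space scale for scale :: "complex \<Rightarrow> 'v::ab_group_add \<Rightarrow> 'v"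
begin

abbreviation TC :: "(nat \<times> nat \<Rightarrow> 'v) set" where "TC \<equiv> tcarrier"

lemma tens_in: "tens scale f v \<in> TC"
proof -
  have "{k. tens scale f v k \<noteq> 0} \<subseteq> {j. xycoeff f j \<noteq> 0}"
    by (auto simp: tens_def)
  thus ?thesis unfolding tcarrier_def using finite_subset finite_xycoeff by blast
qed

lemma tc_zero: "0 \<in> TC" by (simp add: tcarrier_def)
lemma tc_add:
  assumes "F \<in> TC" "G \<in> TC" shows "F + G \<in> TC"
proof -
  have "{k. (F + G) k \<noteq> 0} \<subseteq> {k. F k \<noteq> 0} \<union> {k. G k \<noteq> 0}" by auto
  moreover have "finite ({k. F k \<noteq> 0} \<union> {k. G k \<noteq> 0})" using assms by (simp add: tcarrier_def)
  ultimately show ?thesis unfolding tcarrier_def using finite_subset by blast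
qed
lemma tc_minus: "F \<in> TC \<Longrightarrow> - F \<in> TC"
  unfolding tcarrier_def by simp
lemma tc_diff: "F \<in> TC \<Longrightarrow> G \<in> TC \<Longrightarrow> F - G \<in> TC"
  using tc_add[of F "- G"] tc_minus[of G] by simp
lemma tc_scale:
  assumes "F \<in> TC" shows "tscale scale c F \<in> TC"
proof -
  have "{k. tscale scale c F k \<noteq> 0} \<subseteq> {k. F k \<noteq> 0}" by (auto simp: tscale_def)
  thus ?thesis using assms unfolding tcarrier_def using finite_subset by blast
qed
lemma tc_sum: "(\<And>i. i \<in> Ks \<Longrightarrow> G i \<in> TC) \<Longrightarrow> sum G Ks \<in> TC"
  by (induction Ks rule: infinite_finite_induct) (auto simp: tc_zero tc_add)
lemma tc_sum_list: "(\<And>F. F \<in> set xs \<Longrightarrow> F \<in> TC) \<Longrightarrow> sum_list xs \<in> TC"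
  by (induction xs) (auto simp: tc_zero tc_add)

lemma tscale_minus1: "tscale scale (-1) (F :: nat \<times> nat \<Rightarrow> 'v) = - F"
  by (simp add: tscale_def fun_eq_iff)

lemma opT_super:
  assumes "finite S" "{k. F k \<noteq> 0} \<subseteq> S"
  shows "opT scale P F j = (\<Sum>k\<in>S. scale (xycoeff (P (xymonom k)) j) (F k))"
  unfolding opT_def
  by (rule sum.mono_neutral_left[OF assms(1) assms(2)]) auto

lemma opT_as_sum: "opT scale P F = (\<Sum>k\<in>{k. F k \<noteq> 0}. tens scale (P (xymonom k)) (F k))"
  by (simp add: fun_eq_iff opT_def fun_sum_apply tens_def)

lemma opT_in: "opT scale P F \<in> TC"
  unfolding opT_as_sum by (rule tc_sum) (rule tens_in)

lemma opT_add:
  assumes "F \<in> TC" "G \<in> TC"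
  shows "opT scale P (F + G) = opT scale P F + opT scale P G"
proof -
  let ?S = "{k. F k \<noteq> 0} \<union> {k. G k \<noteq> 0}"
  have fin: "finite ?S" using assms by (auto simp: tcarrier_def)
  have s1: "{k. (F + G) k \<noteq> 0} \<subseteq> ?S" by auto
  have s2: "{k. F k \<noteq> 0} \<subseteq> ?S" "{k. G k \<noteq> 0} \<subseteq> ?S" by auto
  show ?thesis
    by (simp add: fun_eq_iff opT_super[OF fin s1] opT_super[OF fin s2(1)] opT_super[OF fin s2(2)]
        scale_right_distrib sum.distrib)
qed

lemma opT_zero[simp]: "opT scale P 0 = 0"
  by (simp add: opT_def fun_eq_iff)

lemma opT_tscale:
  assumes "F \<in> TC"
  shows "opT scale P (tscale scale c F) = tscale scale c (opT scale P F)"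
proof -
  have fin: "finite {k. F k \<noteq> 0}" using assms by (auto simp: tcarrier_def)
  have sub: "{k. tscale scale c F k \<noteq> 0} \<subseteq> {k. F k \<noteq> 0}" by (auto simp: tscale_def)
  show ?thesis
  proof
    fix j
    have "opT scale P (tscale scale c F) j = (\<Sum>k\<in>{k. F k \<noteq> 0}. scale (xycoeff (P (xymonom k)) j) (tscale scale c F k))"
      by (rule opT_super[OF fin sub])
    also have "\<dots> = scale c (\<Sum>k\<in>{k. F k \<noteq> 0}. scale (xycoeff (P (xymonom k)) j) (F k))"
      by (simp add: tscale_def scale_sum_right mult.commute)
    also have "\<dots> = tscale scale c (opT scale P F) j"
      by (simp add: tscale_def opT_def)
    finally show "opT scale P (tscale scale c F) j = tscale scale c (opT scale P F) j" .
  qed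
qed

lemma opT_sum:
  "(\<And>i. i \<in> Ks \<Longrightarrow> G i \<in> TC) \<Longrightarrow> opT scale P (sum G Ks) = (\<Sum>i\<in>Ks. opT scale P (G i))"
  by (induction Ks rule: infinite_finite_induct) (auto simp: opT_add tc_sum)

lemma opT_diff:
  assumes "F \<in> TC" "G \<in> TC"
  shows "opT scale P (F - G) = opT scale P F - opT scale P G"
proof -
  have "opT scale P (F - G) = opT scale P (F + tscale scale (-1) G)"
    by (simp add: tscale_minus1)
  also have "\<dots> = opT scale P F + tscale scale (-1) (opT scale P G)"
    using assms by (simp add: opT_add tc_scale opT_tscale)
  also have "\<dots> = opT scale P F - opT scale P G"
    by (simp add: tscale_minus1)
  finally show ?thesis .
qed

lemma opT_tens:
  assumes "linP P"
  shows "opT scale P (tens scale f v) = tens scale (P f) v"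
proof
  fix j
  let ?S = "{k. xycoeff f k \<noteq> 0}"
  have fin: "finite ?S" by (rule finite_xycoeff)
  have sub: "{k. tens scale f v k \<noteq> 0} \<subseteq> ?S" by (auto simp: tens_def)
  have "P f = P (\<Sum>k\<in>?S. cst (xycoeff f k) * xymonom k)"
    using poly_expand[OF fin order_refl] by simp
  also have "\<dots> = (\<Sum>k\<in>?S. cst (xycoeff f k) * P (xymonom k))"
    using assms by (simp add: linP_sum) (simp add: linP_def)
  finally have Pf: "P f = \<dots>" .
  have X: "xycoeff (P f) j = (\<Sum>k\<in>?S. xycoeff (P (xymonom k)) j * xycoeff f k)"
    unfolding Pf xycoeff_sum xycoeff_cst_mult by (simp add: mult.commute)
  have "opT scale P (tens scale f v) j = (\<Sum>k\<in>?S. scale (xycoeff (P (xymonom k)) j) (tens scale f v k))"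
    by (rule opT_super[OF fin sub])
  also have "\<dots> = scale (xycoeff (P f) j) v"
    unfolding X tens_def by (simp add: scale_sum_left)
  finally show "opT scale P (tens scale f v) j = tens scale (P f) v j"
    by (simp add: tens_def)
qed

lemma scale_if01: "scale (if b then 1 else 0) x = (if b then x else 0)"
  by simp

lemma tc_as_sum:
  assumes "F \<in> TC"
  shows "F = (\<Sum>k\<in>{k. F k \<noteq> 0}. tens scale (xymonom k) (F k))"
proof
  fix j
  have fin: "finite {k. F k \<noteq> 0}" using assms by (auto simp: tcarrier_def)
  have "(\<Sum>k\<in>{k. F k \<noteq> 0}. tens scale (xymonom k) (F k)) j
      = (\<Sum>k\<in>{k. F k \<noteq> 0}. if k = j then F k else 0)"
    unfolding fun_sum_apply tens_def xycoeff_xymonom scale_if01 by simp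
  also have "\<dots> = F j" using fin by (simp add: sum.delta')
  finally show "F j = (\<Sum>k\<in>{k. F k \<noteq> 0}. tens scale (xymonom k) (F k)) j" by simp
qed

lemma opT_id: "F \<in> TC \<Longrightarrow> opT scale (\<lambda>f. f) F = F"
  using tc_as_sum[symmetric] by (simp add: opT_as_sum)

lemma opT_comp:
  assumes "linP P"
  shows "opT scale P (opT scale Q F) = opT scale (\<lambda>f. P (Q f)) F"
  unfolding opT_as_sum[of Q] opT_as_sum[of "\<lambda>f. P (Q f)"]
  by (subst opT_sum) (auto simp: tens_in opT_tens assms)

lemma opT_plusP: "opT scale (\<lambda>f. P f + Q f) F = opT scale P F + opT scale Q F"
  by (simp add: opT_def fun_eq_iff xycoeff_add scale_left_distrib sum.distrib)
lemma opT_diffP: "opT scale (\<lambda>f. P f - Q f) F = opT scale P F - opT scale Q F"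
  by (simp add: opT_def fun_eq_iff xycoeff_diff scale_left_diff_distrib sum_subtractf)
lemma opT_cmultP: "opT scale (\<lambda>f. cst c * P f) F = tscale scale c (opT scale P F)"
  by (simp add: opT_def fun_eq_iff xycoeff_cst_mult tscale_def scale_sum_right)
lemma opT_zeroP: "opT scale (\<lambda>f. 0) F = 0"
  by (simp add: opT_def fun_eq_iff)

lemma tens_add1: "tens scale (f + g) v = tens scale f v + tens scale g v"
  by (simp add: tens_def fun_eq_iff xycoeff_add scale_left_distrib)
lemma tens_add2: "tens scale f (u + v) = tens scale f u + tens scale f v"
  by (simp add: tens_def fun_eq_iff scale_right_distrib)
lemma tens_diff1: "tens scale (f - g) v = tens scale f v - tens scale g v"
  by (simp add: tens_def fun_eq_iff xycoeff_diff scale_left_diff_distrib)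
lemma tens_diff2: "tens scale f (u - v) = tens scale f u - tens scale f v"
  by (simp add: tens_def fun_eq_iff scale_right_diff_distrib)
lemma tens_cmult1: "tens scale (cst c * f) v = tscale scale c (tens scale f v)"
  unfolding tens_def tscale_def xycoeff_cst_mult by (simp add: fun_eq_iff mult.commute)
lemma tens_scale2: "tens scale f (scale c v) = tscale scale c (tens scale f v)"
  by (simp add: tens_def fun_eq_iff tscale_def mult.commute)
lemma tens_zero2[simp]: "tens scale f 0 = 0"
  by (simp add: tens_def fun_eq_iff)
lemma tens_zero1[simp]: "tens scale 0 v = 0"
  by (simp add: tens_def fun_eq_iff)
lemma tens_sum2: "tens scale f (sum g S) = (\<Sum>i\<in>S. tens scale f (g i))"
  by (induction S rule: infinite_finite_induct) (auto simp: tens_add2)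
lemma tens_sum1: "tens scale (sum g S) v = (\<Sum>i\<in>S. tens scale (g i) v)"
  by (induction S rule: infinite_finite_induct) (auto simp: tens_add1)
lemma tens_cst: "tens scale (cst c) v = tens scale 1 (scale c v)"
  by (simp add: tens_def fun_eq_iff xycoeff_cst xycoeff_1)

end


definition rA :: "('v \<Rightarrow> 'v) \<Rightarrow> (nat \<times> nat \<Rightarrow> 'v) \<Rightarrow> nat \<times> nat \<Rightarrow> 'v" where
  "rA r F = (\<lambda>j. r (F j))"

locale tmod = cvs scale for scale :: "complex \<Rightarrow> 'v::ab_group_add \<Rightarrow> 'v" +
  fixes \<rho> :: "gbasis \<Rightarrow> 'v \<Rightarrow> 'v"
  assumes gm: "gmodule_on scale UNIV \<rho>"
begin

lemma r_add: "\<rho> x (u + v) = \<rho> x u + \<rho> x v"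
  using gm by (simp add: gmodule_on_def)
lemma r_scale: "\<rho> x (scale c u) = scale c (\<rho> x u)"
  using gm by (simp add: gmodule_on_def)
lemma r_zero[simp]: "\<rho> x 0 = 0"
  using r_scale[of x 0 0] by simp
lemma r_minus: "\<rho> x (- u) = - \<rho> x u"
  using r_scale[of x "-1" u] by simp
lemma r_diff: "\<rho> x (u - v) = \<rho> x u - \<rho> x v"
  using r_add[of x u "- v"] r_minus[of x v] by simp
lemma r_sum: "\<rho> x (sum g S) = (\<Sum>i\<in>S. \<rho> x (g i))"
  by (induction S rule: infinite_finite_induct) (auto simp: r_add)
lemma r_br: "\<rho> x (\<rho> y v) - \<rho> y (\<rho> x v) = (\<Sum>(c, z)\<leftarrow>br x y. scale c (\<rho> z v))"
  using gm by (simp add: gmodule_on_def)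

lemma rA_in: "F \<in> TC \<Longrightarrow> rA (\<rho> x) F \<in> TC"
proof -
  assume a: "F \<in> TC"
  have "{k. rA (\<rho> x) F k \<noteq> 0} \<subseteq> {k. F k \<noteq> 0}" by (auto simp: rA_def)
  thus ?thesis using a unfolding tcarrier_def using finite_subset by blast
qed
lemma rA_add: "rA (\<rho> x) (F + G) = rA (\<rho> x) F + rA (\<rho> x) G"
  by (simp add: rA_def fun_eq_iff r_add)
lemma rA_diff: "rA (\<rho> x) (F - G) = rA (\<rho> x) F - rA (\<rho> x) G"
  by (simp add: rA_def fun_eq_iff r_diff)
lemma rA_tscale: "rA (\<rho> x) (tscale scale c F) = tscale scale c (rA (\<rho> x) F)"
  by (simp add: rA_def fun_eq_iff r_scale tscale_def)
lemma rA_tens: "rA (\<rho> x) (tens scale f v) = tens scale f (\<rho> x v)"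
  by (simp add: rA_def fun_eq_iff r_scale tens_def)
lemma rA_sum: "rA (\<rho> x) (sum G S) = (\<Sum>i\<in>S. rA (\<rho> x) (G i))"
  by (simp add: rA_def fun_eq_iff fun_sum_apply r_sum)

lemma rA_opT:
  assumes "F \<in> TC"
  shows "rA (\<rho> x) (opT scale P F) = opT scale P (rA (\<rho> x) F)"
proof
  fix j
  have fin: "finite {k. F k \<noteq> 0}" using assms by (auto simp: tcarrier_def)
  have sub: "{k. rA (\<rho> x) F k \<noteq> 0} \<subseteq> {k. F k \<noteq> 0}" by (auto simp: rA_def)
  have "opT scale P (rA (\<rho> x) F) j = (\<Sum>k\<in>{k. F k \<noteq> 0}. scale (xycoeff (P (xymonom k)) j) (rA (\<rho> x) F k))"
    by (rule opT_super[OF fin sub])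
  also have "\<dots> = rA (\<rho> x) (opT scale P F) j"
    by (simp add: rA_def opT_def r_sum r_scale)
  finally show "rA (\<rho> x) (opT scale P F) j = opT scale P (rA (\<rho> x) F) j" by simp
qed

lemma tens_act_eq: "tens_act scale A \<rho> x F = opT scale (A x) F + rA (\<rho> x) F"
  by (simp add: tens_act_def opT_def rA_def fun_eq_iff)

lemma tens_act_tens:
  "linP (A x) \<Longrightarrow> tens_act scale A \<rho> x (tens scale f v) = tens scale (A x f) v + tens scale f (\<rho> x v)"
  by (simp add: tens_act_eq opT_tens rA_tens)

lemma tscale_add: "tscale scale c (F + G) = tscale scale c F + tscale scale c G"
  by (simp add: tscale_def fun_eq_iff scale_right_distrib)

lemma opT_listP:
  "opT scale (\<lambda>f. \<Sum>(c, z)\<leftarrow>l. cst c * A z f) F = (\<Sum>(c, z)\<leftarrow>l. tscale scale c (opT scale (A z) F))"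
proof (induction l)
  case Nil thus ?case by (simp add: opT_zeroP)
next
  case (Cons p l)
  obtain c z where p: "p = (c, z)" by (cases p)
  have "opT scale (\<lambda>f. \<Sum>(c, z)\<leftarrow>p # l. cst c * A z f) F
      = opT scale (\<lambda>f. cst c * A z f + (\<Sum>(c, z)\<leftarrow>l. cst c * A z f)) F" by (simp add: p)
  also have "\<dots> = tscale scale c (opT scale (A z) F) + opT scale (\<lambda>f. \<Sum>(c, z)\<leftarrow>l. cst c * A z f) F"
    by (simp add: opT_plusP opT_cmultP)
  finally show ?case using Cons by (simp add: p)
qed

lemma rA_listP:
  "(\<lambda>j. \<Sum>(c, z)\<leftarrow>l. scale c (\<rho> z (F j))) = (\<Sum>(c, z)\<leftarrow>l. tscale scale c (rA (\<rho> z) F))"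
proof (induction l)
  case Nil thus ?case by (simp add: fun_eq_iff)
next
  case (Cons p l)
  obtain c z where p: "p = (c, z)" by (cases p)
  show ?case using Cons by (simp add: p fun_eq_iff tscale_def rA_def)
qed

lemma list_split_tscale:
  "(\<Sum>(c, z)\<leftarrow>l. tscale scale c (G1 z + G2 z)) = (\<Sum>(c, z)\<leftarrow>l. tscale scale c (G1 z)) + (\<Sum>(c, z)\<leftarrow>l. tscale scale c (G2 z))"
proof (induction l)
  case Nil thus ?case by simp
next
  case (Cons p l)
  obtain c z where p: "p = (c, z)" by (cases p)
  show ?case using Cons by (simp add: p fun_eq_iff tscale_def scale_right_distrib algebra_simps)
qed

lemma tens_gmodule:
  assumes lin: "\<And>x. linP (A x)"
    and brk: "\<And>x y f. A x (A y f) - A y (A x f) = (\<Sum>(c, z)\<leftarrow>br x y. cst c * A z f)"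
  shows "gmodule_on (tscale scale) TC (tens_act scale A \<rho>)"
proof -
  let ?T = "tens_act scale A \<rho>"
  have sub: "subspace_in (tscale scale) TC"
    unfolding subspace_in_def using tc_zero tc_add tc_scale by blast
  have inn: "?T x F \<in> TC" if "F \<in> TC" for x F
    using that by (simp add: tens_act_eq tc_add opT_in rA_in)
  have add: "?T x (F + G) = ?T x F + ?T x G" if "F \<in> TC" "G \<in> TC" for x F G
    using that by (simp add: tens_act_eq opT_add rA_add algebra_simps)
  have scl: "?T x (tscale scale c F) = tscale scale c (?T x F)" if "F \<in> TC" for x c F
    using that by (simp add: tens_act_eq opT_tscale rA_tscale tscale_add)
  have brT: "?T x (?T y F) - ?T y (?T x F) = (\<Sum>(c, z)\<leftarrow>br x y. tscale scale c (?T z F))"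
    if F: "F \<in> TC" for x y F
  proof -
    have e1: "?T x (?T y F) = opT scale (\<lambda>f. A x (A y f)) F + opT scale (A x) (rA (\<rho> y) F)
        + opT scale (A y) (rA (\<rho> x) F) + rA (\<rho> x) (rA (\<rho> y) F)" for x y
      using F by (simp add: tens_act_eq opT_add opT_in rA_in rA_add rA_opT opT_comp lin)
    have "?T x (?T y F) - ?T y (?T x F)
        = (opT scale (\<lambda>f. A x (A y f)) F - opT scale (\<lambda>f. A y (A x f)) F)
          + (rA (\<rho> x) (rA (\<rho> y) F) - rA (\<rho> y) (rA (\<rho> x) F))"
      unfolding e1 by (simp add: algebra_simps)
    also have "opT scale (\<lambda>f. A x (A y f)) F - opT scale (\<lambda>f. A y (A x f)) F
        = opT scale (\<lambda>f. \<Sum>(c, z)\<leftarrow>br x y. cst c * A z f) F"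
      by (simp add: opT_diffP[symmetric] brk)
    also have "rA (\<rho> x) (rA (\<rho> y) F) - rA (\<rho> y) (rA (\<rho> x) F)
        = (\<lambda>j. \<Sum>(c, z)\<leftarrow>br x y. scale c (\<rho> z (F j)))"
      by (simp add: rA_def fun_eq_iff r_br)
    also have "opT scale (\<lambda>f. \<Sum>(c, z)\<leftarrow>br x y. cst c * A z f) F + (\<lambda>j. \<Sum>(c, z)\<leftarrow>br x y. scale c (\<rho> z (F j)))
        = (\<Sum>(c, z)\<leftarrow>br x y. tscale scale c (?T z F))"
      by (simp only: opT_listP rA_listP tens_act_eq list_split_tscale)
    finally show ?thesis .
  qed
  show ?thesis
    unfolding gmodule_on_def using sub inn add scl brT by blast
qed

end


definition dlt :: "'a::comm_ring_1 \<Rightarrow> 'a poly \<Rightarrow> 'a poly" where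
  "dlt c p = pcompose p [:c, 1:] - p"

lemma dlt_deg0:
  assumes "degree p = 0" shows "dlt c p = 0"
proof -
  from assms have "p = [:coeff p 0:]" by (rule degree_0_id[symmetric])
  then show ?thesis unfolding dlt_def by (metis pcompose_const diff_self)
qed

lemma degree_less_helper:
  fixes r :: "'a::comm_ring_1 poly"
  assumes "degree r \<le> d" "coeff r d = 0" "d > 0"
  shows "degree r < d"
proof (cases "r = 0")
  case True thus ?thesis using assms by simp
next
  case False
  hence "coeff r (degree r) \<noteq> 0" by simp
  thus ?thesis using assms by (metis le_neq_implies_less)
qed

lemma dlt_degree_less:
  fixes p :: "'a::idom poly"
  assumes "degree p > 0"
  shows "degree (dlt c p) < degree p"
proof -
  let ?q = "pcompose p [:c, 1:]"
  have dq: "degree ?q = degree p" by (simp add: degree_pcompose)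
  have lq: "lead_coeff ?q = lead_coeff p" by (simp add: lead_coeff_comp)
  have "degree (dlt c p) \<le> degree p" unfolding dlt_def using dq
    by (metis degree_diff_le order_refl)
  moreover have "coeff (dlt c p) (degree p) = 0" unfolding dlt_def using dq lq by simp
  ultimately show ?thesis using assms by (rule degree_less_helper)
qed

lemma dlt_nonzero:
  fixes p :: "'a::{idom, ring_char_0} poly"
  assumes c: "c \<noteq> 0" and d: "degree p > 0"
  shows "dlt c p \<noteq> 0"
proof
  assume "dlt c p = 0"
  hence eq: "pcompose p [:c, 1:] = p" by (simp add: dlt_def)
  have step: "poly p (x + c) = poly p x" for x
    using arg_cong[OF eq, of "\<lambda>q. poly q x"] by (simp add: poly_pcompose algebra_simps)
  have vals: "poly p (of_nat n * c) = poly p 0" for n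
  proof (induction n)
    case 0 thus ?case by simp
  next
    case (Suc n)
    have "poly p (of_nat (Suc n) * c) = poly p (of_nat n * c + c)" by (simp add: algebra_simps)
    also have "\<dots> = poly p (of_nat n * c)" by (rule step)
    finally show ?case using Suc by simp
  qed
  let ?r = "p - [:poly p 0:]"
  have "range (\<lambda>n::nat. of_nat n * c) \<subseteq> {x. poly ?r x = 0}" using vals by auto
  moreover have "infinite (range (\<lambda>n::nat. of_nat n * c))"
  proof (rule range_inj_infinite)
    show "inj (\<lambda>n::nat. of_nat n * c)" using c by (auto intro!: injI)
  qed
  ultimately have "infinite {x. poly ?r x = 0}" using infinite_super by blast
  hence "?r = 0" using poly_roots_finite by blast
  hence "p = [:poly p 0:]" by simp
  hence "degree p = 0" by (metis degree_pCons_0)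
  thus False using d by simp
qed

lemma iter_exists:
  assumes dom: "\<And>x. Dom x \<Longrightarrow> Dom (T x)"
    and P1: "\<And>x. Dom x \<Longrightarrow> deg x = 0 \<Longrightarrow> T x = 0"
    and P2: "\<And>x. Dom x \<Longrightarrow> deg x \<noteq> 0 \<Longrightarrow> T x \<noteq> 0 \<and> deg (T x) < (deg x :: nat)"
    and "Dom x"
  shows "\<exists>k. deg ((T ^^ k) x) = 0"
  using assms(4)
proof (induction "deg x" arbitrary: x rule: less_induct)
  case less
  show ?case
  proof (cases "deg x = 0")
    case True thus ?thesis by (metis funpow_0)
  next
    case False
    with P2 less.prems have "deg (T x) < deg x" by blast
    with less.hyps[of "T x"] dom less.prems obtain k where "deg ((T ^^ k) (T x)) = 0" by blast
    thus ?thesis by (metis funpow_Suc_right o_apply)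
  qed
qed

lemma iter_dom: "(\<And>x. Dom x \<Longrightarrow> Dom (T x)) \<Longrightarrow> Dom x \<Longrightarrow> Dom ((T ^^ k) x)"
  by (induction k) auto

lemma iter_family:
  assumes dom: "\<And>x. Dom x \<Longrightarrow> Dom (T x)"
    and P1: "\<And>x. Dom x \<Longrightarrow> deg x = 0 \<Longrightarrow> T x = 0"
    and P2: "\<And>x. Dom x \<Longrightarrow> deg x \<noteq> 0 \<Longrightarrow> T x \<noteq> 0 \<and> deg (T x) < (deg x :: nat)"
    and deg0: "deg 0 = 0" and T0: "T 0 = 0"
    and fin: "finite B" and fd: "\<And>b. b \<in> B \<Longrightarrow> Dom (f b)"
    and nz: "b0 \<in> B" "f b0 \<noteq> 0"
  shows "\<exists>k. (\<forall>b\<in>B. deg ((T ^^ k) (f b)) = 0) \<and> (\<exists>b\<in>B. (T ^^ k) (f b) \<noteq> 0)"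
proof -
  define kk where "kk x = (LEAST k. deg ((T ^^ k) x) = 0)" for x
  have kk1: "deg ((T ^^ kk x) x) = 0" if "Dom x" for x
    unfolding kk_def by (rule LeastI_ex, rule iter_exists[OF dom P1 P2 that])
  have kk2: "deg ((T ^^ j) x) \<noteq> 0" if "j < kk x" for x j
    using that unfolding kk_def by (rule not_less_Least)
  have nzit: "(T ^^ j) x \<noteq> 0" if "Dom x" "x \<noteq> 0" "j \<le> kk x" for x j
    using that(3)
  proof (induction j)
    case 0 thus ?case using that by simp
  next
    case (Suc j)
    hence "(T ^^ j) x \<noteq> 0" "deg ((T ^^ j) x) \<noteq> 0" using kk2[of j x] by auto
    moreover have "Dom ((T ^^ j) x)" by (rule iter_dom[of Dom T, OF dom that(1)])
    ultimately show ?case using P2 by simp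
  qed
  have zero_after: "(T ^^ (j + i)) x = 0 \<or> deg ((T ^^ (j + i)) x) = 0"
    if "Dom x" "deg ((T ^^ j) x) = 0" for x j i
  proof (induction i)
    case 0 thus ?case using that by simp
  next
    case (Suc i)
    have D: "Dom ((T ^^ (j + i)) x)" by (rule iter_dom[of Dom T, OF dom that(1)])
    from Suc show ?case
    proof
      assume "(T ^^ (j + i)) x = 0"
      thus ?thesis using T0 by simp
    next
      assume "deg ((T ^^ (j + i)) x) = 0"
      hence "T ((T ^^ (j + i)) x) = 0" using P1 D by blast
      thus ?thesis by simp
    qed
  qed
  define K where "K = Max (kk ` f ` B)"
  have Kge: "kk (f b) \<le> K" if "b \<in> B" for b
    unfolding K_def using fin that by (auto intro!: Max_ge)
  obtain b1 where b1: "b1 \<in> B" "kk (f b1) = K"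
  proof -
    have "K \<in> kk ` f ` B" unfolding K_def using fin nz by (intro Max_in) auto
    thus ?thesis using that by blast
  qed
  have all0: "deg ((T ^^ K) (f b)) = 0" if "b \<in> B" for b
  proof -
    have "K = kk (f b) + (K - kk (f b))" using Kge[OF that] by simp
    then show ?thesis using zero_after[OF fd[OF that] kk1[OF fd[OF that]], of "K - kk (f b)"] deg0
      by (metis)
  qed
  have "\<exists>b\<in>B. (T ^^ K) (f b) \<noteq> 0"
  proof (cases "K = 0")
    case True thus ?thesis using nz by auto
  next
    case False
    hence "0 < kk (f b1)" using b1 by simp
    hence "f b1 \<noteq> 0"
    proof -
      assume "0 < kk (f b1)"
      hence "deg ((T ^^ 0) (f b1)) \<noteq> 0" by (rule kk2)
      thus "f b1 \<noteq> 0" using deg0 by auto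
    qed
    thus ?thesis using nzit[OF fd[OF b1(1)], of K] b1 by auto
  qed
  thus ?thesis using all0 by blast
qed


context cvs
begin

lemma tens_sum_eval: "(\<Sum>b\<in>B. tens scale (p b) b) j = (\<Sum>b\<in>B. scale (xycoeff (p b) j) b)"
  by (simp add: fun_sum_apply tens_def)

lemma tens_unique:
  assumes fin: "finite B" and ind: "independent B"
    and eq: "(\<Sum>b\<in>B. tens scale (p b) b) = (\<Sum>b\<in>B. tens scale (q b) b)"
    and b: "b \<in> B"
  shows "p b = q b"
proof -
  have "xycoeff (p b) j = xycoeff (q b) j" for j
  proof -
    have "(\<Sum>b\<in>B. scale (xycoeff (p b) j) b) = (\<Sum>b\<in>B. scale (xycoeff (q b) j) b)"
      using arg_cong[OF eq, of "\<lambda>F. F j"] by (simp add: tens_sum_eval)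
    hence "(\<Sum>b\<in>B. scale (xycoeff (p b) j - xycoeff (q b) j) b) = 0"
      by (simp add: scale_left_diff_distrib sum_subtractf)
    thus "xycoeff (p b) j = xycoeff (q b) j"
      using independentD[OF ind fin order_refl, of "\<lambda>b. xycoeff (p b) j - xycoeff (q b) j", OF _ b] by simp
  qed
  thus ?thesis by (simp add: poly_eq_xycoeff)
qed

lemma tens_decomp:
  assumes F: "F \<in> TC" and finT: "finite T" and inT: "\<And>k. F k \<in> span T"
  shows "\<exists>B f. finite B \<and> independent B \<and> B \<subseteq> span T \<and> span T \<subseteq> span B
     \<and> F = (\<Sum>b\<in>B. tens scale (f b) b)"
proof -
  obtain B where B: "B \<subseteq> span T" "independent B" "span T \<subseteq> span B"
    by (rule basis_exists[of "span T"]) (simp add: span_span)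
  have finB: "finite B" using independent_span_bound[OF finT B(2)] B(1) by blast
  have "\<forall>k. \<exists>w. F k = (\<Sum>b\<in>B. scale (w b) b)"
  proof
    fix k
    have "F k \<in> span B" using inT B(3) by blast
    thus "\<exists>w. F k = (\<Sum>b\<in>B. scale (w b) b)" using span_finite[OF finB] by auto
  qed
  then obtain u where u: "\<And>k. F k = (\<Sum>b\<in>B. scale (u k b) b)" by metis
  let ?S = "{k. F k \<noteq> 0}"
  have finS: "finite ?S" using F by (simp add: tcarrier_def)
  define f where "f b = (\<Sum>k\<in>?S. cst (u k b) * xymonom k)" for b
  have xf: "xycoeff (f b) j = (if j \<in> ?S then u j b else 0)" for b j
    unfolding f_def xycoeff_sum xycoeff_cst_mult xycoeff_xymonom
    using finS by (simp add: if_distrib[of "\<lambda>x. _ * x"] sum.delta cong: if_cong)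
  have "F = (\<Sum>b\<in>B. tens scale (f b) b)"
  proof
    fix j
    show "F j = (\<Sum>b\<in>B. tens scale (f b) b) j"
    proof (cases "F j = 0")
      case True thus ?thesis unfolding tens_sum_eval xf by simp
    next
      case False thus ?thesis unfolding tens_sum_eval xf using u[of j] by simp
    qed
  qed
  thus ?thesis using finB B by blast
qed

end


locale omod = tmod scale \<rho> for scale :: "complex \<Rightarrow> 'v::ab_group_add \<Rightarrow> 'v" and \<rho> +
  fixes A :: "gbasis \<Rightarrow> complex poly poly \<Rightarrow> complex poly poly"
    and lam :: complex and sig :: "complex poly" and e :: complex
    and Zc :: "int \<Rightarrow> gbasis" and aL :: "int \<Rightarrow> complex poly"
  assumes lin: "\<And>x. linP (A x)"
    and brk: "\<And>x y f. A x (A y f) - A y (A x f) = (\<Sum>(c, z)\<leftarrow>br x y. cst c * A z f)"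
    and lam0: "lam \<noteq> 0" and e0: "e \<noteq> 0" and sig0: "sig \<noteq> 0"
    and AH: "\<And>m f. A (H m) f = cst (lam powi m) * polyX * shiftY m f"
    and AL: "\<And>m f. A (L m) f = cst (lam powi m) * shiftY m f * [:aL m, 1:]"
    and AZ: "\<And>m f. A (Zc m) f = cst (lam powi m) * [:sig:] * shiftX e (shiftY m f)"
    and degZ: "\<And>m. gdeg (Zc m) = m"
    and comm: "\<And>x. (\<forall>f. A x ([:sig:] * f) = [:sig:] * A x f) \<or> (\<exists>Q. linP Q \<and> (\<forall>f. A x f = [:sig:] * Q f))"
    and irr: "irreducible_gmod scale UNIV \<rho>"
    and restr: "restricted_gmod UNIV \<rho>"
begin

abbreviation TA where "TA \<equiv> tens_act scale A \<rho>"

lemma gmodT: "gmodule_on (tscale scale) TC TA"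
  by (rule tens_gmodule[OF lin brk])

definition W :: "nat \<Rightarrow> 'v set" where
  "W K = {v. \<forall>x. gdeg x > int K \<longrightarrow> \<rho> x v = 0}"

lemma W_zero: "0 \<in> W K" by (simp add: W_def)
lemma W_add: "u \<in> W K \<Longrightarrow> v \<in> W K \<Longrightarrow> u + v \<in> W K" by (simp add: W_def r_add)
lemma W_scale: "u \<in> W K \<Longrightarrow> scale c u \<in> W K" by (simp add: W_def r_scale)
lemma W_sum: "(\<And>i. i \<in> S \<Longrightarrow> g i \<in> W K) \<Longrightarrow> sum g S \<in> W K"
  by (induction S rule: infinite_finite_induct) (auto simp: W_zero W_add)
lemma W_mono: "K \<le> K' \<Longrightarrow> W K \<subseteq> W K'" by (auto simp: W_def)
lemma W_ex: "\<exists>K. v \<in> W K"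
  using restr by (auto simp: restricted_gmod_def W_def)
lemma W_ex_fin: "finite S \<Longrightarrow> \<exists>K. S \<subseteq> W K"
proof (induction S rule: finite_induct)
  case empty thus ?case by simp
next
  case (insert v S)
  then obtain K1 where "S \<subseteq> W K1" by blast
  moreover obtain K2 where "v \<in> W K2" using W_ex by blast
  ultimately have "insert v S \<subseteq> W (max K1 K2)"
    using W_mono[of K1 "max K1 K2"] W_mono[of K2 "max K1 K2"] by auto
  thus ?case by blast
qed

lemma opT_W: "(\<And>k. G k \<in> W K) \<Longrightarrow> opT scale P G j \<in> W K"
  unfolding opT_def by (rule W_sum) (simp add: W_scale)

lemma act_high:
  assumes "\<And>k. G k \<in> W K" "gdeg x > int K"
  shows "TA x G = opT scale (A x) G"
  using assms by (simp add: tens_act_eq rA_def W_def fun_eq_iff)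

lemma act_high_tens:
  assumes "v \<in> W K" "gdeg x > int K"
  shows "TA x (tens scale f v) = tens scale (A x f) v"
  using assms by (simp add: tens_act_tens lin W_def)

definition invs :: "(nat \<times> nat \<Rightarrow> 'v) set \<Rightarrow> bool" where
  "invs N \<longleftrightarrow> N \<subseteq> TC \<and> subspace_in (tscale scale) N \<and> (\<forall>x. \<forall>F\<in>N. TA x F \<in> N)"

lemma invs_zero: "invs N \<Longrightarrow> 0 \<in> N" by (simp add: invs_def subspace_in_def)
lemma invs_add: "invs N \<Longrightarrow> F \<in> N \<Longrightarrow> G \<in> N \<Longrightarrow> F + G \<in> N" by (simp add: invs_def subspace_in_def)
lemma invs_scale: "invs N \<Longrightarrow> F \<in> N \<Longrightarrow> tscale scale c F \<in> N" by (simp add: invs_def subspace_in_def)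
lemma invs_diff: "invs N \<Longrightarrow> F \<in> N \<Longrightarrow> G \<in> N \<Longrightarrow> F - G \<in> N"
  using invs_add[of N F "tscale scale (-1) G"] invs_scale[of N G "-1"] by (simp add: tscale_minus1)
lemma invs_sum: "invs N \<Longrightarrow> (\<And>i. i \<in> S \<Longrightarrow> G i \<in> N) \<Longrightarrow> sum G S \<in> N"
  by (induction S rule: infinite_finite_induct) (auto simp: invs_zero invs_add)
lemma invs_act: "invs N \<Longrightarrow> F \<in> N \<Longrightarrow> TA x F \<in> N" by (simp add: invs_def)
lemma invs_TC: "invs N \<Longrightarrow> F \<in> N \<Longrightarrow> F \<in> TC" by (auto simp: invs_def)

definition Good :: "(nat \<times> nat \<Rightarrow> 'v) set \<Rightarrow> nat \<Rightarrow> (complex poly poly \<Rightarrow> complex poly poly) \<Rightarrow> bool" where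
  "Good N K P \<longleftrightarrow> linP P \<and> (\<forall>G. G \<in> N \<longrightarrow> (\<forall>k. G k \<in> W K) \<longrightarrow> opT scale P G \<in> N)"

lemma Good_id: "invs N \<Longrightarrow> Good N K (\<lambda>f. f)"
  by (auto simp: Good_def linP_id opT_id invs_TC)

lemma Good_diff: "invs N \<Longrightarrow> Good N K P \<Longrightarrow> Good N K Q \<Longrightarrow> Good N K (\<lambda>f. P f - Q f)"
  by (auto simp: Good_def linP_diff opT_diffP invs_diff)

lemma Good_comp: "Good N K P \<Longrightarrow> Good N K Q \<Longrightarrow> Good N K (\<lambda>f. P (Q f))"
  unfolding Good_def using opT_comp opT_W linP_comp by metis

lemma Good_funpow: "invs N \<Longrightarrow> Good N K P \<Longrightarrow> Good N K (P ^^ n)"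
proof (induction n)
  case 0 thus ?case using Good_id by (simp add: id_def)
next
  case (Suc n)
  have "(P ^^ Suc n) = (\<lambda>f. P ((P ^^ n) f))" by (simp add: fun_eq_iff)
  thus ?case using Good_comp Suc by metis
qed

definition Sop :: "int \<Rightarrow> complex poly poly \<Rightarrow> complex poly poly" where
  "Sop m f = shiftX e (shiftY m f)"

lemma linP_Sop: "linP (Sop m)"
  by (simp add: linP_def Sop_def shiftX_add shiftY_add shiftX_mult shiftY_mult)

lemma Good_Sop:
  assumes N: "invs N" and c: "c \<noteq> 0" "sig = [:c:]" and m: "m > int K"
  shows "Good N K (Sop m)"
proof -
  let ?a = "lam powi m * c"
  have a0: "?a \<noteq> 0" using lam0 c by simp
  have AZ': "A (Zc m) = (\<lambda>f. cst ?a * Sop m f)"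
    by (simp add: fun_eq_iff AZ c Sop_def cst_mult) (simp add: cst_def)
  show ?thesis unfolding Good_def
  proof (intro conjI allI impI)
    show "linP (Sop m)" by (rule linP_Sop)
    fix G assume G: "G \<in> N" "\<forall>k. G k \<in> W K"
    have "TA (Zc m) G \<in> N" using invs_act[OF N G(1)] .
    moreover have "TA (Zc m) G = tscale scale ?a (opT scale (Sop m) G)"
      using act_high[of G K "Zc m"] G m degZ by (simp add: AZ' opT_cmultP)
    ultimately have "tscale scale (1 / ?a) (tscale scale ?a (opT scale (Sop m) G)) \<in> N"
      using invs_scale[OF N] by simp
    thus "opT scale (Sop m) G \<in> N" using a0 lam0 by (simp add: tscale_def)
  qed
qed

end


context omod
begin

lemma D_eq: "Sop (m + 1) f - Sop m f = shiftX e (shiftY m (dlt [:-1:] f))"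
proof -
  have "shiftY 1 f = pcompose f [:[:-1:], 1:]" by (simp add: shiftY_def)
  hence "shiftY (m + 1) f = shiftY m (pcompose f [:[:-1:], 1:])" by (metis shiftY_shiftY)
  thus ?thesis by (simp add: Sop_def dlt_def shiftY_diff shiftX_diff)
qed

lemma E_eq: "degree g = 0 \<Longrightarrow> Sop m g - g = [:dlt e (coeff g 0):]"
proof -
  assume "degree g = 0"
  hence g: "g = [:coeff g 0:]" by (rule degree_0_id[symmetric])
  have "Sop m g = [:pcompose (coeff g 0) [:e, 1:]:]"
    by (subst g, simp add: Sop_def shiftX_const)
  thus ?thesis by (subst (2) g) (simp add: dlt_def)
qed

lemma reduction:
  assumes N: "invs N" and c: "c \<noteq> 0" "sig = [:c:]" and F: "F \<in> N" "F \<noteq> 0"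
  shows "\<exists>v. v \<noteq> 0 \<and> tens scale 1 v \<in> N"
proof -
  have FT: "F \<in> TC" using invs_TC[OF N F(1)] .
  let ?T = "F ` {k. F k \<noteq> 0}"
  have finT: "finite ?T" using FT by (simp add: tcarrier_def)
  obtain K where K: "?T \<subseteq> W K" using W_ex_fin[OF finT] by blast
  have FW: "\<And>k. F k \<in> W K"
  proof -
    fix k show "F k \<in> W K" using K by (cases "F k = 0") (auto simp: W_zero)
  qed
  have inT: "\<And>k. F k \<in> span ?T"
  proof -
    fix k show "F k \<in> span ?T" by (cases "F k = 0") (auto simp: span_zero intro: span_base)
  qed
  obtain B f where B: "finite B" "independent B" and Fdec: "F = (\<Sum>b\<in>B. tens scale (f b) b)"
    using tens_decomp[OF FT finT inT] by blast
  obtain b0 where b0: "b0 \<in> B" "f b0 \<noteq> 0"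
  proof -
    { assume "\<forall>b\<in>B. f b = 0"
      hence "F = 0" using Fdec by simp
      with F(2) have False by simp }
    thus ?thesis using that by blast
  qed
  define m0 :: int where "m0 = int K + 1"
  define D where "D f = Sop (m0 + 1) f - Sop m0 f" for f
  define E where "E f = Sop m0 f - f" for f
  have Deq: "D f = shiftX e (shiftY m0 (dlt [:-1:] f))" for f
    unfolding D_def by (rule D_eq)
  have c1: "[:-1:] \<noteq> (0 :: complex poly)" by simp
  obtain k1 where k1: "\<forall>b\<in>B. degree ((D ^^ k1) (f b)) = 0" "\<exists>b\<in>B. (D ^^ k1) (f b) \<noteq> 0"
  proof -
    have h1: "\<And>x. True \<Longrightarrow> True" by simp
    have h2: "\<And>x. True \<Longrightarrow> degree x = 0 \<Longrightarrow> D x = 0" by (simp add: Deq dlt_deg0)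
    have h3: "\<And>x. True \<Longrightarrow> degree x \<noteq> 0 \<Longrightarrow> D x \<noteq> 0 \<and> degree (D x) < degree x"
      using dlt_nonzero[OF c1] dlt_degree_less by (simp add: Deq)
    have h4: "degree (0 :: complex poly poly) = 0" by simp
    have h5: "D 0 = 0" by (simp add: Deq dlt_def)
    have h7: "\<And>b. b \<in> B \<Longrightarrow> True" by simp
    have "\<exists>k. (\<forall>b\<in>B. degree ((D ^^ k) (f b)) = 0) \<and> (\<exists>b\<in>B. (D ^^ k) (f b) \<noteq> 0)"
      by (rule iter_family[of "\<lambda>_. True" D degree B f b0, OF h1 h2 h3 h4 h5 B(1) h7 b0])
    thus ?thesis using that by blast
  qed
  define g where "g b = (D ^^ k1) (f b)" for b
  have gdeg: "\<And>b. b \<in> B \<Longrightarrow> degree (g b) = 0" using k1(1) by (simp add: g_def)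
  obtain b1 where b1: "b1 \<in> B" "g b1 \<noteq> 0" using k1(2) by (auto simp: g_def)
  have Eeq: "degree x = 0 \<Longrightarrow> E x = [:dlt e (coeff x 0):]" for x
    unfolding E_def by (rule E_eq)
  obtain k2 where k2: "\<forall>b\<in>B. degree (coeff ((E ^^ k2) (g b)) 0) = 0" "\<exists>b\<in>B. (E ^^ k2) (g b) \<noteq> 0"
  proof -
    have h1: "\<And>x. degree x = 0 \<Longrightarrow> degree (E x) = 0" by (simp add: Eeq)
    have h2: "\<And>x. degree x = 0 \<Longrightarrow> degree (coeff x 0) = 0 \<Longrightarrow> E x = 0"
      by (simp add: Eeq dlt_deg0)
    have h3: "\<And>x. degree x = 0 \<Longrightarrow> degree (coeff x 0) \<noteq> 0 \<Longrightarrow> E x \<noteq> 0 \<and> degree (coeff (E x) 0) < degree (coeff x 0)"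
      using dlt_nonzero[OF e0] dlt_degree_less by (simp add: Eeq)
    have h4: "degree (coeff (0 :: complex poly poly) 0) = 0" by simp
    have h5: "E 0 = 0" by (simp add: E_def Sop_def)
    have "\<exists>k. (\<forall>b\<in>B. degree (coeff ((E ^^ k) (g b)) 0) = 0) \<and> (\<exists>b\<in>B. (E ^^ k) (g b) \<noteq> 0)"
      by (rule iter_family[of "\<lambda>x. degree x = 0" E "\<lambda>x. degree (coeff x 0)" B g b1, OF h1 h2 h3 h4 h5 B(1) gdeg b1])
    thus ?thesis using that by blast
  qed
  define P where "P f = (E ^^ k2) ((D ^^ k1) f)" for f
  have hdeg: "degree (P (f b)) = 0" if "b \<in> B" for b
  proof -
    have "degree (g b) = 0" using gdeg[OF that] .
    thus ?thesis unfolding P_def g_def[symmetric]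
    proof (induction k2)
      case 0 thus ?case by simp
    next
      case (Suc k)
      hence "degree ((E ^^ k) (g b)) = 0" by simp
      thus ?case by (simp add: Eeq)
    qed
  qed
  define cc where "cc b = coeff (coeff (P (f b)) 0) 0" for b
  have Pc: "P (f b) = cst (cc b)" if "b \<in> B" for b
  proof -
    have "P (f b) = [:coeff (P (f b)) 0:]" using hdeg[OF that] by (rule degree_0_id[symmetric])
    moreover have "coeff (P (f b)) 0 = [:cc b:]"
      using k2(1) that unfolding cc_def P_def g_def by (metis degree_0_id)
    ultimately show ?thesis by (simp add: cst_def)
  qed
  have GoodS: "Good N K (Sop m)" if "m > int K" for m using Good_Sop[OF N c that] .
  have GD: "Good N K D" unfolding D_def[abs_def]
    by (rule Good_diff[OF N GoodS GoodS]) (simp_all add: m0_def)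
  have GE: "Good N K E" unfolding E_def[abs_def]
    by (rule Good_diff[OF N GoodS Good_id[OF N]]) (simp add: m0_def)
  have GP: "Good N K P" unfolding P_def[abs_def]
    by (rule Good_comp[OF Good_funpow[OF N GE] Good_funpow[OF N GD]])
  have linPP: "linP P" using GP by (simp add: Good_def)
  have "opT scale P F \<in> N" using GP F(1) FW by (simp add: Good_def)
  moreover have "opT scale P F = tens scale 1 (\<Sum>b\<in>B. scale (cc b) b)"
  proof -
    have "opT scale P F = (\<Sum>b\<in>B. opT scale P (tens scale (f b) b))"
      unfolding Fdec by (rule opT_sum) (rule tens_in)
    also have "\<dots> = (\<Sum>b\<in>B. tens scale (cst (cc b)) b)"
      by (rule sum.cong) (simp_all add: opT_tens[OF linPP] Pc)
    also have "\<dots> = tens scale 1 (\<Sum>b\<in>B. scale (cc b) b)"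
      by (simp add: tens_cst tens_sum2)
    finally show ?thesis .
  qed
  moreover have "(\<Sum>b\<in>B. scale (cc b) b) \<noteq> 0"
  proof
    assume "(\<Sum>b\<in>B. scale (cc b) b) = 0"
    hence "\<forall>b\<in>B. cc b = 0" using independentD[OF B(2) B(1) order_refl] by blast
    hence "\<forall>b\<in>B. P (f b) = 0" using Pc by simp
    thus False using k2(2) unfolding P_def g_def by blast
  qed
  ultimately show ?thesis by auto
qed

end


context omod
begin

lemma xycoeff_nz_deg: "xycoeff f k \<noteq> 0 \<Longrightarrow> snd k \<le> degree f"
  by (cases k) (auto simp: xycoeff_def intro: le_degree)

lemma phi_all:
  assumes N: "invs N" and v1: "tens scale 1 v \<in> N"
  shows "tens scale f v \<in> N"
proof -
  obtain K where vK: "v \<in> W K" using W_ex by blast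
  define m :: int where "m = int K + 1"
  define Phi where "Phi = {f. tens scale f v \<in> N}"
  have P1: "1 \<in> Phi" using v1 by (simp add: Phi_def)
  have Padd: "f + g \<in> Phi" if "f \<in> Phi" "g \<in> Phi" for f g
    using that invs_add[OF N] by (simp add: Phi_def tens_add1)
  have Pdiff: "f - g \<in> Phi" if "f \<in> Phi" "g \<in> Phi" for f g
    using that invs_diff[OF N] by (simp add: Phi_def tens_diff1)
  have Pcm: "cst c * f \<in> Phi" if "f \<in> Phi" for f c
    using that invs_scale[OF N] by (simp add: Phi_def tens_cmult1)
  have Pcm_inv: "f \<in> Phi" if "cst c * f \<in> Phi" "c \<noteq> 0" for f c
  proof -
    have "cst (1 / c) * (cst c * f) \<in> Phi" using Pcm[OF that(1)] .
    thus ?thesis using that(2) by (simp add: mult.assoc[symmetric] cst_mult[symmetric])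
  qed
  have Pzero: "0 \<in> Phi" using invs_zero[OF N] by (simp add: Phi_def)
  have Psum: "sum g S \<in> Phi" if "\<And>i. i \<in> S \<Longrightarrow> g i \<in> Phi" for g S
    using that by (induction S rule: infinite_finite_induct) (auto simp: Pzero Padd)
  have PA: "A x f \<in> Phi" if "f \<in> Phi" "gdeg x > int K" for f x
  proof -
    have "TA x (tens scale f v) \<in> N" using invs_act[OF N] that(1) by (simp add: Phi_def)
    thus ?thesis using act_high_tens[OF vK that(2)] by (simp add: Phi_def)
  qed
  have lamm: "lam powi m \<noteq> 0" using lam0 by simp
  have PX: "polyX * f \<in> Phi" if "f \<in> Phi" "degree f = 0" for f
  proof -
    have "A (H m) f \<in> Phi" using PA[OF that(1)] by (simp add: m_def)
    hence "cst (lam powi m) * (polyX * f) \<in> Phi" by (simp add: AH shiftY_degree0[OF that(2)] mult.assoc)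
    thus ?thesis using Pcm_inv lamm by blast
  qed
  have mon0: "xymonom (a, 0) \<in> Phi" for a
  proof (induction a)
    case 0 thus ?case using P1 by (simp add: xymonom_def one_pCons monom_0)
  next
    case (Suc a)
    have "polyX * xymonom (a, 0) \<in> Phi" by (rule PX[OF Suc]) (simp add: xymonom_def degree_monom_eq)
    moreover have "polyX * xymonom (a, 0) = xymonom (Suc a, 0)"
      by (simp add: xymonom_def polyX_def monom_0 monom_Suc)
    ultimately show ?case by simp
  qed
  have from_mon: "f \<in> Phi" if "\<And>k. snd k \<le> b \<Longrightarrow> xymonom k \<in> Phi" "degree f \<le> b" for f b
  proof -
    have "f = (\<Sum>k\<in>{k. xycoeff f k \<noteq> 0}. cst (xycoeff f k) * xymonom k)"
      by (rule poly_expand[OF finite_xycoeff order_refl])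
    moreover have "(\<Sum>k\<in>{k. xycoeff f k \<noteq> 0}. cst (xycoeff f k) * xymonom k) \<in> Phi"
    proof (rule Psum)
      fix k assume "k \<in> {k. xycoeff f k \<noteq> 0}"
      hence "snd k \<le> b" using xycoeff_nz_deg that(2) by fastforce
      thus "cst (xycoeff f k) * xymonom k \<in> Phi" using that(1) Pcm by blast
    qed
    ultimately show ?thesis by simp
  qed
  have Pb: "\<forall>f. degree f \<le> b \<longrightarrow> f \<in> Phi" for b
  proof (induction b)
    case 0
    show ?case
    proof (intro allI impI)
      fix f :: "complex poly poly" assume "degree f \<le> 0"
      thus "f \<in> Phi" using from_mon[of 0 f] mon0 by (metis prod.collapse le_zero_eq)
    qed
  next
    case (Suc b)
    have monS: "xymonom (a, Suc b) \<in> Phi" for a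
    proof -
      define g where "g = xymonom (a, b)"
      have g: "g \<in> Phi" using Suc g_def by (simp add: xymonom_def degree_monom_le)
      have "A (L m) g \<in> Phi" using PA[OF g] by (simp add: m_def)
      hence "cst (lam powi m) * (shiftY m g * [:aL m, 1:]) \<in> Phi"
        by (simp only: AL mult.assoc)
      hence hP: "shiftY m g * [:aL m, 1:] \<in> Phi"
        using Pcm_inv lamm by blast
      let ?h = "shiftY m g * [:aL m, 1:]"
      have g0: "g \<noteq> 0" by (simp add: g_def xymonom_def)
      have dg: "degree g = b" by (simp add: g_def xymonom_def degree_monom_eq)
      have lg: "lead_coeff g = monom 1 a" by (simp add: g_def xymonom_def degree_monom_eq)
      have "degree ?h = degree (shiftY m g) + degree [:aL m, 1:]"
        by (rule degree_mult_eq) (simp_all add: g0)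
      hence dh: "degree ?h = Suc b" using dg by simp
      have lh: "lead_coeff ?h = monom 1 a"
      proof -
        have "lead_coeff (shiftY m g) = monom 1 a" using lg by (simp add: shiftY_def lead_coeff_comp)
        moreover have "lead_coeff ?h = lead_coeff (shiftY m g) * lead_coeff [:aL m, 1:]"
          by (rule lead_coeff_mult)
        ultimately show ?thesis by simp
      qed
      let ?r = "?h - xymonom (a, Suc b)"
      have "degree ?r < Suc b"
      proof (rule degree_less_helper)
        show "degree ?r \<le> Suc b"
        proof (rule degree_diff_le)
          show "degree ?h \<le> Suc b" using dh by simp
          show "degree (xymonom (a, Suc b)) \<le> Suc b" by (simp add: xymonom_def degree_monom_le)
        qed
        show "coeff ?r (Suc b) = 0" using lh dh by (simp add: xymonom_def)
      qed simp
      hence "?r \<in> Phi" using Suc by simp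
      hence hr: "?h - ?r \<in> Phi" using Pdiff hP by blast
      have he: "?h - ?r = xymonom (a, Suc b)" by (simp only: diff_diff_eq2 add_diff_cancel_left')
      show ?thesis using hr he by metis
    qed
    show ?case
    proof (intro allI impI)
      fix f :: "complex poly poly" assume df: "degree f \<le> Suc b"
      have "xymonom k \<in> Phi" if "snd k \<le> Suc b" for k
      proof (cases "snd k = Suc b")
        case True thus ?thesis using monS by (metis prod.collapse)
      next
        case False
        hence "snd k \<le> b" using that by simp
        hence "degree (xymonom k) \<le> b" unfolding xymonom_def using degree_monom_le le_trans by blast
        thus ?thesis using Suc by simp
      qed
      thus "f \<in> Phi" using from_mon df by blast
    qed
  qed
  show ?thesis using Pb[of "degree f"] by (simp add: Phi_def)
qed

end


context omod
begin

lemma R_nonzero: "\<exists>v::'v. v \<noteq> 0"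
  using irr by (auto simp: irreducible_gmod_def)

lemma tens1_nz: "v \<noteq> 0 \<Longrightarrow> tens scale 1 v \<noteq> 0"
proof
  assume "v \<noteq> 0" "tens scale 1 v = 0"
  hence "tens scale 1 v (0, 0) = 0" by simp
  thus False using \<open>v \<noteq> 0\<close> by (simp add: tens_def xycoeff_1)
qed

lemma TC_nonzero: "TC \<noteq> {0}"
proof -
  obtain v :: 'v where "v \<noteq> 0" using R_nonzero by blast
  hence "tens scale 1 v \<in> TC" "tens scale 1 v \<noteq> 0" using tens_in tens1_nz by auto
  thus ?thesis by blast
qed

lemma irr_if_const:
  assumes c: "c \<noteq> 0" "sig = [:c:]"
  shows "irreducible_gmod (tscale scale) TC TA"
  unfolding irreducible_gmod_def
proof (intro conjI gmodT TC_nonzero allI impI)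
  fix N assume NN: "N \<subseteq> TC \<and> subspace_in (tscale scale) N \<and> (\<forall>x. \<forall>v\<in>N. TA x v \<in> N)"
  hence N: "invs N" by (simp add: invs_def)
  show "N = {0} \<or> N = TC"
  proof (cases "N = {0}")
    case True thus ?thesis by simp
  next
    case False
    then obtain F where F: "F \<in> N" "F \<noteq> 0" using invs_zero[OF N] by blast
    obtain v0 where v0: "v0 \<noteq> 0" "tens scale 1 v0 \<in> N" using reduction[OF N c F] by blast
    define R' where "R' = {v. tens scale 1 v \<in> N}"
    have sub: "subspace_in scale R'"
      unfolding subspace_in_def R'_def
      using invs_zero[OF N] invs_add[OF N] invs_scale[OF N] by (simp add: tens_add2 tens_scale2)
    have inv: "\<forall>x. \<forall>v\<in>R'. \<rho> x v \<in> R'"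
    proof (intro allI ballI)
      fix x v assume "v \<in> R'"
      hence v: "tens scale 1 v \<in> N" by (simp add: R'_def)
      have "TA x (tens scale 1 v) \<in> N" by (rule invs_act[OF N v])
      moreover have "tens scale (A x 1) v \<in> N" by (rule phi_all[OF N v])
      ultimately have "TA x (tens scale 1 v) - tens scale (A x 1) v \<in> N" by (rule invs_diff[OF N])
      thus "\<rho> x v \<in> R'" by (simp add: R'_def tens_act_tens lin)
    qed
    have "R' = {0} \<or> R' = UNIV"
      using irr sub inv unfolding irreducible_gmod_def by blast
    moreover have "v0 \<in> R'" using v0 by (simp add: R'_def)
    ultimately have RU: "R' = UNIV" using v0 by blast
    have "TC \<subseteq> N"
    proof
      fix G assume G: "G \<in> TC"
      have "(\<Sum>k\<in>{k. G k \<noteq> 0}. tens scale (xymonom k) (G k)) \<in> N"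
      proof (rule invs_sum[OF N])
        fix k
        have "tens scale 1 (G k) \<in> N" using RU by (auto simp: R'_def)
        thus "tens scale (xymonom k) (G k) \<in> N" by (rule phi_all[OF N])
      qed
      thus "G \<in> N" using tc_as_sum[OF G] by simp
    qed
    thus ?thesis using NN by blast
  qed
qed

definition Ms :: "complex poly poly \<Rightarrow> complex poly poly" where "Ms f = [:sig:] * f"

lemma linP_Ms: "linP Ms"
  unfolding linP_def Ms_def by (simp add: distrib_left mult.left_commute del: mult_pCons_left)

lemma red_if_nonconst:
  assumes nc: "\<not> (\<exists>c. c \<noteq> 0 \<and> sig = [:c:])"
  shows "\<not> irreducible_gmod (tscale scale) TC TA"
proof
  assume irrT: "irreducible_gmod (tscale scale) TC TA"
  have dsig: "degree sig \<ge> 1"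
  proof (rule ccontr)
    assume "\<not> degree sig \<ge> 1"
    hence "degree sig = 0" by simp
    hence "sig = [:coeff sig 0:]" by (rule degree_0_id[symmetric])
    moreover hence "coeff sig 0 \<noteq> 0" using sig0 by (metis pCons_0_0)
    ultimately show False using nc by blast
  qed
  define N where "N = opT scale Ms ` TC"
  have NTC: "N \<subseteq> TC" by (auto simp: N_def opT_in)
  have subN: "subspace_in (tscale scale) N"
    unfolding subspace_in_def
  proof (intro conjI ballI allI)
    show "0 \<in> N" unfolding N_def using tc_zero by (metis image_eqI opT_zero)
    fix F G assume "F \<in> N" "G \<in> N"
    then obtain F' G' where "F' \<in> TC" "G' \<in> TC" "F = opT scale Ms F'" "G = opT scale Ms G'"
      by (auto simp: N_def)
    thus "F + G \<in> N" unfolding N_def using opT_add tc_add by (metis image_eqI)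
  next
    fix c F assume "F \<in> N"
    then obtain F' where "F' \<in> TC" "F = opT scale Ms F'" by (auto simp: N_def)
    thus "tscale scale c F \<in> N" unfolding N_def using opT_tscale tc_scale by (metis image_eqI)
  qed
  have invN: "\<forall>x. \<forall>F\<in>N. TA x F \<in> N"
  proof (intro allI ballI)
    fix x F assume "F \<in> N"
    then obtain G where G: "G \<in> TC" "F = opT scale Ms G" by (auto simp: N_def)
    have e1: "TA x F = opT scale (\<lambda>f. A x (Ms f)) G + opT scale Ms (rA (\<rho> x) G)"
      by (simp add: G tens_act_eq opT_comp lin rA_opT)
    obtain H where H: "H \<in> TC" "opT scale (\<lambda>f. A x (Ms f)) G = opT scale Ms H"
    proof -
      from comm[of x] show ?thesis
      proof
        assume cm: "\<forall>f. A x ([:sig:] * f) = [:sig:] * A x f"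
        have "(\<lambda>f. A x (Ms f)) = (\<lambda>f. Ms (A x f))" using cm by (simp add: Ms_def)
        hence "opT scale (\<lambda>f. A x (Ms f)) G = opT scale Ms (opT scale (A x) G)"
          by (simp add: opT_comp linP_Ms)
        thus ?thesis using that opT_in by blast
      next
        assume "\<exists>Q. linP Q \<and> (\<forall>f. A x f = [:sig:] * Q f)"
        then obtain Q where Q: "\<forall>f. A x f = [:sig:] * Q f" by blast
        have "(\<lambda>f. A x (Ms f)) = (\<lambda>f. Ms (Q (Ms f)))" using Q by (simp add: Ms_def)
        hence "opT scale (\<lambda>f. A x (Ms f)) G = opT scale Ms (opT scale (\<lambda>f. Q (Ms f)) G)"
          by (simp add: opT_comp linP_Ms)
        thus ?thesis using that opT_in by blast
      qed
    qed
    have "TA x F = opT scale Ms (H + rA (\<rho> x) G)"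
      using e1 H by (simp add: opT_add rA_in G)
    moreover have "H + rA (\<rho> x) G \<in> TC" using H G by (simp add: tc_add rA_in)
    ultimately show "TA x F \<in> N" by (simp add: N_def)
  qed
  obtain v :: 'v where v: "v \<noteq> 0" using R_nonzero by blast
  have Nnz: "N \<noteq> {0}"
  proof -
    have mem: "tens scale [:sig:] v \<in> N"
    proof -
      have "opT scale Ms (tens scale 1 v) = tens scale [:sig:] v"
        by (simp add: opT_tens linP_Ms Ms_def)
      thus ?thesis unfolding N_def using tens_in by (metis image_eqI)
    qed
    obtain a where a: "coeff sig a \<noteq> 0" using sig0 by (metis leading_coeff_0_iff)
    have "tens scale [:sig:] v (a, 0) \<noteq> 0" using a v by (simp add: tens_def xycoeff_def)
    hence "tens scale [:sig:] v \<noteq> 0" by auto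
    thus ?thesis using mem by blast
  qed
  have notin: "tens scale 1 v \<notin> N"
  proof
    assume "tens scale 1 v \<in> N"
    then obtain G where G: "G \<in> TC" "tens scale 1 v = opT scale Ms G" by (auto simp: N_def)
    let ?T = "insert v (G ` {k. G k \<noteq> 0})"
    have finT: "finite ?T" using G by (simp add: tcarrier_def)
    have inT: "\<And>k. G k \<in> span ?T"
    proof -
      fix k show "G k \<in> span ?T" by (cases "G k = 0") (auto simp: span_zero intro: span_base)
    qed
    obtain B g where B: "finite B" "independent B" "span ?T \<subseteq> span B"
      and Gdec: "G = (\<Sum>b\<in>B. tens scale (g b) b)"
      using tens_decomp[OF G(1) finT inT] by blast
    have "v \<in> span B" using B(3) span_base[of v ?T] by blast
    then obtain u where u: "v = (\<Sum>b\<in>B. scale (u b) b)" using span_finite[OF B(1)] by auto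
    have "opT scale Ms G = (\<Sum>b\<in>B. tens scale ([:sig:] * g b) b)"
      unfolding Gdec by (simp add: opT_sum tens_in opT_tens linP_Ms Ms_def)
    moreover have "tens scale 1 v = (\<Sum>b\<in>B. tens scale (cst (u b)) b)"
      unfolding u by (simp add: tens_sum2 tens_cst)
    ultimately have eq: "(\<Sum>b\<in>B. tens scale ([:sig:] * g b) b) = (\<Sum>b\<in>B. tens scale (cst (u b)) b)"
      using G by simp
    have u0: "u b = 0" if b: "b \<in> B" for b
    proof -
      have gb: "[:sig:] * g b = cst (u b)" by (rule tens_unique[OF B(1) B(2) eq b])
      show ?thesis
      proof (cases "g b = 0")
        case True thus ?thesis using gb by simp
      next
        case False
        have "degree ([:sig:] * g b) = degree [:sig:] + degree (g b)"
          by (rule degree_mult_eq) (simp_all add: sig0 False)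
        hence "degree (g b) = degree ([:sig:] * g b)" by simp
        also have "\<dots> = degree (cst (u b))" using gb by (rule arg_cong)
        also have "\<dots> = 0" by (simp add: cst_def)
        finally have "degree (g b) = 0" .
        hence gq: "g b = [:coeff (g b) 0:]" by (rule degree_0_id[symmetric])
        hence q0: "coeff (g b) 0 \<noteq> 0" using False by (metis pCons_0_0)
        have "[:sig:] * g b = [:sig * coeff (g b) 0:]" by (subst gq) simp
        hence "[:sig * coeff (g b) 0:] = [:[:u b:]:]" using gb by (simp add: cst_def)
        hence su: "sig * coeff (g b) 0 = [:u b:]" by simp
        have "degree (sig * coeff (g b) 0) = degree sig + degree (coeff (g b) 0)"
          by (rule degree_mult_eq) (simp_all add: sig0 q0)
        hence "degree (sig * coeff (g b) 0) \<ge> 1" using dsig by simp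
        thus ?thesis using su by simp
      qed
    qed
    have "v = 0" unfolding u using u0 by simp
    thus False using v by simp
  qed
  have "N = {0} \<or> N = TC"
    using irrT NTC subN invN unfolding irreducible_gmod_def by blast
  thus False using Nnz notin tens_in[of 1 v] by blast
qed

theorem omod_main: "irreducible_gmod (tscale scale) TC TA \<longleftrightarrow> (\<exists>c. c \<noteq> 0 \<and> sig = [:c:])"
  using irr_if_const red_if_nonconst by blast

end


lemma comm_I: "(\<forall>f. omegaI lam eta sig x ([:sig:] * f) = [:sig:] * omegaI lam eta sig x f)
   \<or> (\<exists>Q. linP Q \<and> (\<forall>f. omegaI lam eta sig x f = [:sig:] * Q f))"
proof (cases x)
  case (I m)
  have "linP (\<lambda>f. cst (lam powi m) * shiftX (-1) (shiftY m f))"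
    by (simp add: linP_def shiftX_add shiftY_add shiftX_mult shiftY_mult algebra_simps)
  moreover have "\<forall>f. omegaI lam eta sig x f = [:sig:] * (cst (lam powi m) * shiftX (-1) (shiftY m f))"
    using I by (simp add: mult_ac)
  ultimately show ?thesis by blast
qed (rule disjI1, rule allI, simp only: omegaI.simps omegaJ.simps shiftY_mult shiftY_const mult_zero_right mult_zero_left mult_ac)+

lemma comm_J: "(\<forall>f. omegaJ lam eta sig x ([:sig:] * f) = [:sig:] * omegaJ lam eta sig x f)
   \<or> (\<exists>Q. linP Q \<and> (\<forall>f. omegaJ lam eta sig x f = [:sig:] * Q f))"
proof (cases x)
  case (J m)
  have "linP (\<lambda>f. cst (lam powi m) * shiftX 1 (shiftY m f))"
    by (simp add: linP_def shiftX_add shiftY_add shiftX_mult shiftY_mult algebra_simps)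
  moreover have "\<forall>f. omegaJ lam eta sig x f = [:sig:] * (cst (lam powi m) * shiftX 1 (shiftY m f))"
    using J by (simp add: mult_ac)
  ultimately show ?thesis by blast
qed (rule disjI1, rule allI, simp only: omegaI.simps omegaJ.simps shiftY_mult shiftY_const mult_zero_right mult_zero_left mult_ac)+

theorem theorem4p1:
  fixes s :: "complex \<Rightarrow> 'v::ab_group_add \<Rightarrow> 'v"
    and \<rho> :: "gbasis \<Rightarrow> 'v \<Rightarrow> 'v"
    and lam eta :: complex
    and sig :: "complex poly"
  assumes "vector_space s"
    and "lam \<noteq> 0"
    and "sig \<noteq> 0"
    and "irreducible_gmod s UNIV \<rho>"
    and "restricted_gmod UNIV \<rho>"
  shows "(irreducible_gmod (tscale s) tcarrier (tens_act s (omegaI lam eta sig) \<rho>)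
            \<longleftrightarrow> (\<exists>c. c \<noteq> 0 \<and> sig = [:c:]))
       \<and> (irreducible_gmod (tscale s) tcarrier (tens_act s (omegaJ lam eta sig) \<rho>)
            \<longleftrightarrow> (\<exists>c. c \<noteq> 0 \<and> sig = [:c:]))"
proof
  have gm: "gmodule_on s UNIV \<rho>" using assms(4) by (simp add: irreducible_gmod_def)
  interpret OI: omod s \<rho> "omegaI lam eta sig" lam sig "-1" I "\<lambda>m. [:of_int m * eta, - of_int m:]"
  proof (rule omod.intro)
    show "tmod s \<rho>" by (rule tmod.intro, unfold cvs_def, rule assms(1), rule tmod_axioms.intro, rule gm)
  qed (unfold_locales; (rule comm_I | simp add: assms gm linP_omegaI omegaI_brk))
  show "irreducible_gmod (tscale s) tcarrier (tens_act s (omegaI lam eta sig) \<rho>)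
            \<longleftrightarrow> (\<exists>c. c \<noteq> 0 \<and> sig = [:c:])" by (rule OI.omod_main)
next
  have gm: "gmodule_on s UNIV \<rho>" using assms(4) by (simp add: irreducible_gmod_def)
  interpret OJ: omod s \<rho> "omegaJ lam eta sig" lam sig 1 J "\<lambda>m. [:of_int m * eta, of_int m:]"
  proof (rule omod.intro)
    show "tmod s \<rho>" by (rule tmod.intro, unfold cvs_def, rule assms(1), rule tmod_axioms.intro, rule gm)
  qed (unfold_locales; (rule comm_J | simp add: assms gm linP_omegaJ omegaJ_brk))
  show "irreducible_gmod (tscale s) tcarrier (tens_act s (omegaJ lam eta sig) \<rho>)
            \<longleftrightarrow> (\<exists>c. c \<noteq> 0 \<and> sig = [:c:])" by (rule OJ.omod_main)
qed


end
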